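(* Let $H=(V,E)$ be a hypergraph. Then: (1) $H$ has an Euler family if and only if each block of $H$ has an Euler family. (2) $H$ has an Euler tour if and only if each block $B$ of $H$ has an Euler tour that traverses (as an anchor) every separating vertex of $H$ contained in $B$.
   Context: A hypergraph $H=(V,E)$ consists of a finite nonempty vertex set $V$, a finite edge set $E$ disjoint from $V$, and an incidence function assigning to each edge $e\in E$ a subset of $V$ (also denoted $e$); distinct edges may have the same vertex set. Hypergraphs are assumed to have no empty edges. A hypersubgraph of $H$ is a hypergraph $(V',E')$ with $V'\subseteq V$, $E'\subseteq E$ (each $e\in E'$ contained in $V'$). $H$ decomposes into hypersubgraphs $H_1,H_2$ if $E$ is the disjoint union of $E(H_1)$ and $E(H_2)$. A walk is a sequence $W=v_0e_1v_1e_2\cdots e_kv_k$ with $v_i\in V$, $e_i\in E$, such that for each $i$, $v_{i-1}\ne v_i$ and $v_{i-1},v_i\in e_i$; the $v_i$ are its anchors. $W$ is closed if $k\ge 2$ and $v_0=v_k$; it is a strict trail if $e_1,\dots,e_k$ are pairwise distinct. A hypergraph is connected if any two distinct vertices are joined by a walk. An Euler tour is a closed strict trail traversing every edge; an Euler family is a family of closed strict trails such that every edge lies in exactly one trail and no two trails have a common anchor. In a connected hypergraph $H$, a vertex $v$ is a separating vertex if $H$ decomposes into two connected hypersubgraphs $H_1,H_2$, each with at least one edge, with $V(H_1)\cap V(H_2)=\{v\}$; for general $H$, separating vertices are those of its connected components. A hypergraph is non-separable if it is connected, has no empty edges, and has no separating vertex; a block of $H$ is a maximal non-separable hypersubgraph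 of $H$.
   Formalization: Part (2), the equivalence for Euler tours, is asserted only for connected H. The statement above fails without it. *)

theory Defs
  imports Main
begin

text \<open>A hypergraph is given by a vertex set V, an edge set E (of a separate type,
hence disjoint from V) and an incidence function inc.  Hypersubgraphs share the
incidence function of the ambient hypergraph.\<close>

definition hypergraph :: "'v set \<Rightarrow> 'e set \<Rightarrow> ('e \<Rightarrow> 'v set) \<Rightarrow> bool" where
  "hypergraph V E inc \<longleftrightarrow> finite V \<and> V \<noteq> {} \<and> finite E \<and>
     (\<forall>e\<in>E. inc e \<subseteq> V \<and> inc e \<noteq> {})"

definition hypersubgraph ::
  "'v set \<Rightarrow> 'e set \<Rightarrow> 'v set \<Rightarrow> 'e set \<Rightarrow> ('e \<Rightarrow> 'v set) \<Rightarrow> bool" where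
  "hypersubgraph V' E' V E inc \<longleftrightarrow> hypergraph V' E' inc \<and> V' \<subseteq> V \<and> E' \<subseteq> E"

text \<open>A walk v0 e1 v1 ... ek vk is given by the anchor list vs = [v0,...,vk]
and the edge list es = [e1,...,ek].\<close>

definition walk :: "'v set \<Rightarrow> 'e set \<Rightarrow> ('e \<Rightarrow> 'v set) \<Rightarrow> 'v list \<Rightarrow> 'e list \<Rightarrow> bool" where
  "walk V E inc vs es \<longleftrightarrow> length vs = Suc (length es) \<and> set vs \<subseteq> V \<and>
     (\<forall>i<length es. es ! i \<in> E \<and> vs ! i \<noteq> vs ! Suc i \<and>
        vs ! i \<in> inc (es ! i) \<and> vs ! Suc i \<in> inc (es ! i))"

definition closed_walk :: "'v list \<Rightarrow> 'e list \<Rightarrow> bool" where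
  "closed_walk vs es \<longleftrightarrow> length es \<ge> 2 \<and> hd vs = last vs"

definition closed_strict_trail ::
  "'v set \<Rightarrow> 'e set \<Rightarrow> ('e \<Rightarrow> 'v set) \<Rightarrow> 'v list \<Rightarrow> 'e list \<Rightarrow> bool" where
  "closed_strict_trail V E inc vs es \<longleftrightarrow>
     walk V E inc vs es \<and> closed_walk vs es \<and> distinct es"

definition euler_tour ::
  "'v set \<Rightarrow> 'e set \<Rightarrow> ('e \<Rightarrow> 'v set) \<Rightarrow> 'v list \<Rightarrow> 'e list \<Rightarrow> bool" where
  "euler_tour V E inc vs es \<longleftrightarrow> closed_strict_trail V E inc vs es \<and> set es = E"

definition has_euler_tour :: "'v set \<Rightarrow> 'e set \<Rightarrow> ('e \<Rightarrow> 'v set) \<Rightarrow> bool" where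
  "has_euler_tour V E inc \<longleftrightarrow> (\<exists>vs es. euler_tour V E inc vs es)"

definition euler_family ::
  "'v set \<Rightarrow> 'e set \<Rightarrow> ('e \<Rightarrow> 'v set) \<Rightarrow> ('v list \<times> 'e list) set \<Rightarrow> bool" where
  "euler_family V E inc F \<longleftrightarrow>
     (\<forall>T\<in>F. closed_strict_trail V E inc (fst T) (snd T)) \<and>
     (\<forall>e\<in>E. \<exists>!T\<in>F. e \<in> set (snd T)) \<and>
     (\<forall>T1\<in>F. \<forall>T2\<in>F. T1 \<noteq> T2 \<longrightarrow> set (fst T1) \<inter> set (fst T2) = {})"

definition has_euler_family :: "'v set \<Rightarrow> 'e set \<Rightarrow> ('e \<Rightarrow> 'v set) \<Rightarrow> bool" where
  "has_euler_family V E inc \<longleftrightarrow> (\<exists>F. euler_family V E inc F)"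

definition hconnected :: "'v set \<Rightarrow> 'e set \<Rightarrow> ('e \<Rightarrow> 'v set) \<Rightarrow> bool" where
  "hconnected V E inc \<longleftrightarrow>
     (\<forall>u\<in>V. \<forall>v\<in>V. u \<noteq> v \<longrightarrow>
        (\<exists>vs es. walk V E inc vs es \<and> hd vs = u \<and> last vs = v))"

definition separating_vertex_conn ::
  "'v set \<Rightarrow> 'e set \<Rightarrow> ('e \<Rightarrow> 'v set) \<Rightarrow> 'v \<Rightarrow> bool" where
  "separating_vertex_conn V E inc v \<longleftrightarrow>
     (\<exists>V1 E1 V2 E2.
        hypersubgraph V1 E1 V E inc \<and> hypersubgraph V2 E2 V E inc \<and>
        hconnected V1 E1 inc \<and> hconnected V2 E2 inc \<and>
        E1 \<noteq> {} \<and> E2 \<noteq> {} \<and> E1 \<union> E2 = E \<and> E1 \<inter> E2 = {} \<and>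
        V1 \<inter> V2 = {v})"

definition component ::
  "'v set \<Rightarrow> 'e set \<Rightarrow> ('e \<Rightarrow> 'v set) \<Rightarrow> 'v set \<Rightarrow> 'e set \<Rightarrow> bool" where
  "component V E inc V' E' \<longleftrightarrow>
     hypersubgraph V' E' V E inc \<and> hconnected V' E' inc \<and>
     (\<forall>V'' E''. hypersubgraph V'' E'' V E inc \<and> hconnected V'' E'' inc \<and>
        V' \<subseteq> V'' \<and> E' \<subseteq> E'' \<longrightarrow> V'' = V' \<and> E'' = E')"

definition separating_vertex ::
  "'v set \<Rightarrow> 'e set \<Rightarrow> ('e \<Rightarrow> 'v set) \<Rightarrow> 'v \<Rightarrow> bool" where
  "separating_vertex V E inc v \<longleftrightarrow>
     (\<exists>V' E'. component V E inc V' E' \<and> separating_vertex_conn V' E' inc v)"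

definition non_separable :: "'v set \<Rightarrow> 'e set \<Rightarrow> ('e \<Rightarrow> 'v set) \<Rightarrow> bool" where
  "non_separable V E inc \<longleftrightarrow>
     hconnected V E inc \<and> (\<forall>e\<in>E. inc e \<noteq> {}) \<and>
     \<not> (\<exists>v. separating_vertex V E inc v)"

definition block ::
  "'v set \<Rightarrow> 'e set \<Rightarrow> ('e \<Rightarrow> 'v set) \<Rightarrow> 'v set \<Rightarrow> 'e set \<Rightarrow> bool" where
  "block V E inc VB EB \<longleftrightarrow>
     hypersubgraph VB EB V E inc \<and> non_separable VB EB inc \<and>
     (\<forall>V' E'. hypersubgraph V' E' V E inc \<and> non_separable V' E' inc \<and>
        VB \<subseteq> V' \<and> EB \<subseteq> E' \<longrightarrow> V' = VB \<and> E' = EB)"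

end

theory Submission
  imports Defs
begin

definition Vof :: "('e \<Rightarrow> 'v set) \<Rightarrow> 'e set \<Rightarrow> 'v set" where
  "Vof inc S = (\<Union>e\<in>S. inc e)"

definition connrel :: "('e \<Rightarrow> 'v set) \<Rightarrow> 'e set \<Rightarrow> ('v \<times> 'v) set" where
  "connrel inc S = {(a,b). \<exists>e\<in>S. a \<in> inc e \<and> b \<in> inc e}"

abbreviation conn :: "('e \<Rightarrow> 'v set) \<Rightarrow> 'e set \<Rightarrow> ('v \<times> 'v) set" where
  "conn inc S \<equiv> (connrel inc S)\<^sup>*"

lemma connrel_mono: "S \<subseteq> T \<Longrightarrow> connrel inc S \<subseteq> connrel inc T"
  unfolding connrel_def by blast

lemma conn_mono: "S \<subseteq> T \<Longrightarrow> (a,b) \<in> conn inc S \<Longrightarrow> (a,b) \<in> conn inc T"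
  using rtrancl_mono[OF connrel_mono] by blast

lemma connrel_sym: "sym (connrel inc S)"
  unfolding connrel_def sym_def by blast

lemma conn_sym: "(a,b) \<in> conn inc S \<Longrightarrow> (b,a) \<in> conn inc S"
  using sym_rtrancl[OF connrel_sym] by (meson symD)

lemma conn_step: "e \<in> S \<Longrightarrow> a \<in> inc e \<Longrightarrow> b \<in> inc e \<Longrightarrow> (a,b) \<in> conn inc S"
  unfolding connrel_def by blast

lemma conn_in_Vof: "(a,b) \<in> conn inc S \<Longrightarrow> a \<noteq> b \<Longrightarrow> b \<in> Vof inc S"
  by (induction rule: rtrancl_induct) (auto simp: connrel_def Vof_def)

lemma walk_snoc:
  assumes "walk V S inc vs es" "last vs = b" "b \<noteq> c" "b \<in> inc e" "c \<in> inc e" "e \<in> S" "c \<in> V"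
  shows "walk V S inc (vs @ [c]) (es @ [e])"
proof -
  have len: "length vs = Suc (length es)" using assms(1) unfolding walk_def by auto
  have lastv: "vs ! length es = b" using assms(2) len
    by (metis diff_Suc_1 last_conv_nth list.size(3) nat.distinct(1))
  have "\<forall>i<length (es @ [e]). (es @ [e]) ! i \<in> S \<and> (vs @ [c]) ! i \<noteq> (vs @ [c]) ! Suc i \<and>
          (vs @ [c]) ! i \<in> inc ((es @ [e]) ! i) \<and> (vs @ [c]) ! Suc i \<in> inc ((es @ [e]) ! i)"
  proof (intro allI impI)
    fix i assume i: "i < length (es @ [e])"
    show "(es @ [e]) ! i \<in> S \<and> (vs @ [c]) ! i \<noteq> (vs @ [c]) ! Suc i \<and>
          (vs @ [c]) ! i \<in> inc ((es @ [e]) ! i) \<and> (vs @ [c]) ! Suc i \<in> inc ((es @ [e]) ! i)"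
    proof (cases "i < length es")
      case True
      then show ?thesis using assms(1) len unfolding walk_def by (auto simp: nth_append)
    next
      case False
      then have "i = length es" using i by simp
      then show ?thesis using len lastv assms by (auto simp: nth_append)
    qed
  qed
  then show ?thesis using len assms(1,7) unfolding walk_def by auto
qed

lemma conn_walk:
  assumes "(a,b) \<in> conn inc S" "\<forall>e\<in>S. inc e \<subseteq> V" "a \<in> V"
  shows "a = b \<or> (\<exists>vs es. walk V S inc vs es \<and> hd vs = a \<and> last vs = b)"
  using assms(1)
proof (induction rule: rtrancl_induct)
  case base
  then show ?case by simp
next
  case (step b c)
  from step.hyps(2) obtain e where e: "e \<in> S" "b \<in> inc e" "c \<in> inc e"
    unfolding connrel_def by blast
  have cV: "c \<in> V" using e assms(2) by blast
  show ?case
  proof (cases "b = c")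
    case True
    then show ?thesis using step.IH by simp
  next
    case bc: False
    from step.IH show ?thesis
    proof
      assume "a = b"
      then have "walk V S inc [a,c] [e]" using e cV assms(3) bc
        unfolding walk_def by (auto simp: nth_Cons split: nat.splits)
      then show ?thesis using \<open>a = b\<close> by (metis last_ConsL last_ConsR list.sel(1) not_Cons_self2)
    next
      assume "\<exists>vs es. walk V S inc vs es \<and> hd vs = a \<and> last vs = b"
      then obtain vs es where w: "walk V S inc vs es" "hd vs = a" "last vs = b" by blast
      have "walk V S inc (vs @ [c]) (es @ [e])" using walk_snoc[OF w(1) w(3) bc e(2) e(3) e(1) cV] .
      moreover have "hd (vs @ [c]) = a" using w(1,2) unfolding walk_def
        by (metis append_Nil hd_append2 list.size(3) nat.distinct(1))
      ultimately show ?thesis by auto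
    qed
  qed
qed

lemma walk_conn:
  assumes "walk V S inc vs es"
  shows "(hd vs, last vs) \<in> conn inc S"
proof -
  have len: "length vs = Suc (length es)" using assms unfolding walk_def by auto
  have "\<forall>i\<le>length es. (vs ! 0, vs ! i) \<in> conn inc S"
  proof (intro allI impI)
    fix i show "i \<le> length es \<Longrightarrow> (vs ! 0, vs ! i) \<in> conn inc S"
    proof (induction i)
      case 0 then show ?case by simp
    next
      case (Suc i)
      then have "i < length es" by simp
      then have "es ! i \<in> S" "vs ! i \<in> inc (es ! i)" "vs ! Suc i \<in> inc (es ! i)"
        using assms unfolding walk_def by auto
      then have "(vs ! i, vs ! Suc i) \<in> connrel inc S" unfolding connrel_def by blast
      with Suc show ?case by (meson Suc_leD rtrancl.rtrancl_into_rtrancl)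
    qed
  qed
  moreover have "hd vs = vs ! 0" using len by (metis hd_conv_nth list.size(3) nat.distinct(1))
  moreover have "last vs = vs ! length es" using len
    by (metis diff_Suc_1 last_conv_nth list.size(3) nat.distinct(1))
  ultimately show ?thesis by auto
qed

lemma hconnected_conn:
  assumes "hconnected V E inc" "a \<in> V" "b \<in> V"
  shows "(a,b) \<in> conn inc E"
proof (cases "a = b")
  case False
  then obtain vs es where "walk V E inc vs es" "hd vs = a" "last vs = b"
    using assms unfolding hconnected_def by blast
  then show ?thesis using walk_conn by fastforce
qed simp

lemma conn_hconnected:
  assumes "\<forall>e\<in>E. inc e \<subseteq> V" "\<forall>a\<in>V. \<forall>b\<in>V. (a,b) \<in> conn inc E"
  shows "hconnected V E inc"
  unfolding hconnected_def using conn_walk assms by metis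

definition Rv :: "('e \<Rightarrow> 'v set) \<Rightarrow> 'e set \<Rightarrow> 'v \<Rightarrow> ('e \<times> 'e) set" where
  "Rv inc S v = {(g,h). g \<in> S \<and> h \<in> S \<and> (\<exists>z. z \<noteq> v \<and> z \<in> inc g \<and> z \<in> inc h)}"

definition oneclass :: "('e \<Rightarrow> 'v set) \<Rightarrow> 'e set \<Rightarrow> 'v \<Rightarrow> bool" where
  "oneclass inc S v \<longleftrightarrow> (\<forall>g\<in>S. \<forall>h\<in>S. (g,h) \<in> (Rv inc S v)\<^sup>*)"

lemma Rv_sym: "sym (Rv inc S v)"
  unfolding Rv_def sym_def by blast

lemma Rv_rtr_sym: "(g,h) \<in> (Rv inc S v)\<^sup>* \<Longrightarrow> (h,g) \<in> (Rv inc S v)\<^sup>*"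
  by (metis Rv_sym sym_rtrancl symD)

lemma Rv_mono: "S \<subseteq> T \<Longrightarrow> Rv inc S v \<subseteq> Rv inc T v"
  unfolding Rv_def by blast

lemma Rv_rtr_mono: "S \<subseteq> T \<Longrightarrow> (g,h) \<in> (Rv inc S v)\<^sup>* \<Longrightarrow> (g,h) \<in> (Rv inc T v)\<^sup>*"
  using rtrancl_mono[OF Rv_mono[of S T inc v]] by (rule subsetD)

lemma Rv_rtr_in: "(g,h) \<in> (Rv inc S v)\<^sup>* \<Longrightarrow> g \<in> S \<Longrightarrow> h \<in> S"
proof (induction rule: rtrancl_induct)
  case (step y z) then show ?case unfolding Rv_def by blast
qed simp

lemma class_conn:
  assumes "(h1,h) \<in> (Rv inc S v)\<^sup>*" "h1 \<in> S" "z \<in> inc h1"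
  shows "\<forall>w\<in>inc h. (z,w) \<in> conn inc {k. (h1,k) \<in> (Rv inc S v)\<^sup>*}"
  using assms(1)
proof (induction rule: rtrancl_induct)
  case base
  have "h1 \<in> {k. (h1,k) \<in> (Rv inc S v)\<^sup>*}" by simp
  then show ?case using assms(3) conn_step by metis
next
  case (step h h')
  from step.hyps(2) obtain y where y: "y \<in> inc h" "y \<in> inc h'" unfolding Rv_def by blast
  have zy: "(z,y) \<in> conn inc {k. (h1,k) \<in> (Rv inc S v)\<^sup>*}" using step.IH y(1) by blast
  have "h' \<in> {k. (h1,k) \<in> (Rv inc S v)\<^sup>*}" using rtrancl_into_rtrancl[OF step.hyps] by simp
  then have "\<forall>w\<in>inc h'. (y,w) \<in> conn inc {k. (h1,k) \<in> (Rv inc S v)\<^sup>*}"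
    using y(2) conn_step by metis
  then show ?case using zy rtrancl_trans by metis
qed

lemma class_sep:
  assumes "(g,h1) \<in> (Rv inc S v)\<^sup>*" "g \<in> S" "h2 \<in> S" "(g,h2) \<notin> (Rv inc S v)\<^sup>*"
    "z \<in> inc h1" "z \<in> inc h2"
  shows "z = v"
proof (rule ccontr)
  assume "z \<noteq> v"
  have "h1 \<in> S" using Rv_rtr_in[OF assms(1,2)] .
  then have "(h1,h2) \<in> Rv inc S v" using assms \<open>z \<noteq> v\<close> unfolding Rv_def by blast
  then have "(g,h2) \<in> (Rv inc S v)\<^sup>*" by (rule rtrancl_into_rtrancl[OF assms(1)])
  with assms(4) show False by contradiction
qed

lemma edges_sub: "hypergraph V E inc \<Longrightarrow> e \<in> E \<Longrightarrow> inc e \<subseteq> V"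
  unfolding hypergraph_def by blast

lemma edges_ne: "hypergraph V E inc \<Longrightarrow> e \<in> E \<Longrightarrow> inc e \<noteq> {}"
  unfolding hypergraph_def by blast

lemma Vof_sub: "hypergraph V E inc \<Longrightarrow> S \<subseteq> E \<Longrightarrow> Vof inc S \<subseteq> V"
  unfolding Vof_def hypergraph_def by blast

lemma Vof_mono: "S \<subseteq> T \<Longrightarrow> Vof inc S \<subseteq> Vof inc T"
  unfolding Vof_def by blast

lemma in_Vof: "e \<in> S \<Longrightarrow> x \<in> inc e \<Longrightarrow> x \<in> Vof inc S"
  unfolding Vof_def by blast

lemma hsub_edges:
  assumes H: "hypergraph V E inc" and S: "S \<subseteq> E" "S \<noteq> {}"
  shows "hypersubgraph (Vof inc S) S V E inc"
proof -
  have sub: "Vof inc S \<subseteq> V" by (rule Vof_sub[OF H S(1)])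
  have fin: "finite V" "finite E" using H unfolding hypergraph_def by auto
  obtain e where e: "e \<in> S" using S by blast
  have "inc e \<noteq> {}" using edges_ne[OF H] e S by blast
  then have ne: "Vof inc S \<noteq> {}" using e unfolding Vof_def by blast
  have "\<forall>e\<in>S. inc e \<subseteq> Vof inc S \<and> inc e \<noteq> {}" using edges_ne[OF H] S unfolding Vof_def by blast
  then show ?thesis unfolding hypersubgraph_def hypergraph_def
    using sub S(1) fin ne finite_subset by metis
qed

lemma GAP:
  assumes H: "hypergraph V E inc" "hconnected V E inc"
    and AB: "A \<union> B = E" "A \<inter> B = {}" "A \<noteq> {}" "B \<noteq> {}"
  shows "Vof inc A \<inter> Vof inc B \<noteq> {}"
proof
  assume dis: "Vof inc A \<inter> Vof inc B = {}"
  obtain ea where "ea \<in> A" using AB by blast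
  moreover then have "inc ea \<noteq> {}" using edges_ne[OF H(1)] AB by blast
  ultimately obtain a where ea: "ea \<in> A" "a \<in> inc ea" by blast
  obtain eb where "eb \<in> B" using AB by blast
  moreover then have "inc eb \<noteq> {}" using edges_ne[OF H(1)] AB by blast
  ultimately obtain b where eb: "eb \<in> B" "b \<in> inc eb" by blast
  have aV: "a \<in> V" "b \<in> V" using ea eb AB edges_sub[OF H(1)] by blast+
  have ab: "(a,b) \<in> conn inc E" using hconnected_conn[OF H(2) aV] .
  have reach: "\<And>c. (a,c) \<in> conn inc E \<Longrightarrow> c \<in> Vof inc A"
  proof -
    fix c assume "(a,c) \<in> conn inc E"
    then show "c \<in> Vof inc A"
    proof (induction rule: rtrancl_induct)
      case base then show ?case using ea unfolding Vof_def by blast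
    next
      case (step c d)
      from step.hyps(2) obtain g where g: "g \<in> E" "c \<in> inc g" "d \<in> inc g" unfolding connrel_def by blast
      show ?case
      proof (cases "g \<in> A")
        case True then show ?thesis using g unfolding Vof_def by blast
      next
        case False then have "g \<in> B" using g AB by blast
        then have "c \<in> Vof inc B" using g unfolding Vof_def by blast
        then show ?thesis using dis step.IH by blast
      qed
    qed
  qed
  have "b \<in> Vof inc A" by (rule reach[OF ab])
  moreover have "b \<in> Vof inc B" using eb unfolding Vof_def by blast
  ultimately show False using dis by blast
qed

lemma sep_conn_not_oneclass:
  assumes "separating_vertex_conn V E inc v"
  shows "\<not> oneclass inc E v"
proof
  assume one: "oneclass inc E v"
  from assms obtain V1 E1 V2 E2 where d: "hypersubgraph V1 E1 V E inc" "hypersubgraph V2 E2 V E inc"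
    "E1 \<noteq> {}" "E2 \<noteq> {}" "E1 \<union> E2 = E" "E1 \<inter> E2 = {}" "V1 \<inter> V2 = {v}"
    unfolding separating_vertex_conn_def by blast
  obtain e f where ef: "e \<in> E1" "f \<in> E2" using d by blast
  have sub1: "\<And>g. g \<in> E1 \<Longrightarrow> inc g \<subseteq> V1" using d(1) unfolding hypersubgraph_def hypergraph_def by blast
  have sub2: "\<And>g. g \<in> E2 \<Longrightarrow> inc g \<subseteq> V2" using d(2) unfolding hypersubgraph_def hypergraph_def by blast
  have "(e,f) \<in> (Rv inc E v)\<^sup>*" using one ef d(5) unfolding oneclass_def by blast
  moreover have "\<And>h. (e,h) \<in> (Rv inc E v)\<^sup>* \<Longrightarrow> h \<in> E1"
  proof -
    fix h assume "(e,h) \<in> (Rv inc E v)\<^sup>*"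
    then show "h \<in> E1"
    proof (induction rule: rtrancl_induct)
      case base then show ?case using ef by simp
    next
      case (step h h')
      then obtain z where z: "z \<noteq> v" "z \<in> inc h" "z \<in> inc h'" "h' \<in> E" unfolding Rv_def by blast
      show ?case
      proof (rule ccontr)
        assume "h' \<notin> E1"
        then have "h' \<in> E2" using z d(5) by blast
        then have "z \<in> V1 \<inter> V2" using z sub1 sub2 step.IH by blast
        then show False using d(7) z(1) by blast
      qed
    qed
  qed
  ultimately show False using ef d(6) by blast
qed

lemma class_reach_v:
  assumes H: "hypergraph V E inc" "hconnected V E inc"
    and g: "g \<in> E" and notall: "E - {h\<in>E. (g,h) \<in> (Rv inc E v)\<^sup>*} \<noteq> {}"
    and u: "u \<in> inc g"
  shows "(u,v) \<in> conn inc {h\<in>E. (g,h) \<in> (Rv inc E v)\<^sup>*}"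
proof -
  let ?C = "{h\<in>E. (g,h) \<in> (Rv inc E v)\<^sup>*}"
  have "Vof inc ?C \<inter> Vof inc (E - ?C) \<noteq> {}"
    by (rule GAP[OF H]) (use g notall in auto)
  then obtain z h1 h2 where z: "h1 \<in> ?C" "h2 \<in> E - ?C" "z \<in> inc h1" "z \<in> inc h2"
    unfolding Vof_def by blast
  have "z = v" using class_sep[of g h1 inc E v h2 z] z g by blast
  have kin: "\<And>k. (g,k) \<in> (Rv inc E v)\<^sup>* \<Longrightarrow> k \<in> E" using Rv_rtr_in[OF _ g] by metis
  have "{k. (g,k) \<in> (Rv inc E v)\<^sup>*} = ?C"
  proof (rule set_eqI)
    fix k show "k \<in> {k. (g,k) \<in> (Rv inc E v)\<^sup>*} \<longleftrightarrow> k \<in> ?C"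
      using kin[of k] by (intro iffI; simp)
  qed
  then show ?thesis using class_conn[of g h1 inc E v u] z g u \<open>z = v\<close> by auto
qed

lemma class_conn2:
  assumes "g \<in> E" "h1 \<in> {h\<in>E. (g,h) \<in> (Rv inc E v)\<^sup>*}" "h2 \<in> {h\<in>E. (g,h) \<in> (Rv inc E v)\<^sup>*}"
    "u \<in> inc h1" "w \<in> inc h2"
  shows "(u,w) \<in> conn inc {h\<in>E. (g,h) \<in> (Rv inc E v)\<^sup>*}"
proof -
  have g1: "(g,h1) \<in> (Rv inc E v)\<^sup>*" "(g,h2) \<in> (Rv inc E v)\<^sup>*" "h1 \<in> E" using assms(2,3) by simp_all
  have "(h1,g) \<in> (Rv inc E v)\<^sup>*" by (rule Rv_rtr_sym[OF g1(1)])
  then have hh: "(h1,h2) \<in> (Rv inc E v)\<^sup>*" by (rule rtrancl_trans[OF _ g1(2)])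
  have 1: "(u,w) \<in> conn inc {k. (h1,k) \<in> (Rv inc E v)\<^sup>*}"
    using class_conn[OF hh g1(3) assms(4)] assms(5) by blast
  have 2: "{k. (h1,k) \<in> (Rv inc E v)\<^sup>*} \<subseteq> {h\<in>E. (g,h) \<in> (Rv inc E v)\<^sup>*}"
  proof
    fix k assume "k \<in> {k. (h1,k) \<in> (Rv inc E v)\<^sup>*}"
    then have "(h1,k) \<in> (Rv inc E v)\<^sup>*" by simp
    then have gk: "(g,k) \<in> (Rv inc E v)\<^sup>*" by (rule rtrancl_trans[OF g1(1)])
    then have "k \<in> E" by (rule Rv_rtr_in[OF _ assms(1)])
    then show "k \<in> {h\<in>E. (g,h) \<in> (Rv inc E v)\<^sup>*}" using gk by simp
  qed
  show ?thesis by (rule conn_mono[OF 2 1])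
qed

lemma not_oneclass_sep_conn:
  assumes H: "hypergraph V E inc" "hconnected V E inc" and no: "\<not> oneclass inc E v"
  shows "separating_vertex_conn V E inc v"
proof -
  from no obtain e f where ef: "e \<in> E" "f \<in> E" "(e,f) \<notin> (Rv inc E v)\<^sup>*"
    unfolding oneclass_def by blast
  define E1 where "E1 = {h\<in>E. (e,h) \<in> (Rv inc E v)\<^sup>*}"
  define E2 where "E2 = E - E1"
  define V1 where "V1 = Vof inc E1"
  define V2 where "V2 = Vof inc E2"
  have eE1: "e \<in> E1" using ef unfolding E1_def by simp
  have fE2: "f \<in> E2" using ef unfolding E2_def E1_def by simp
  have E1E: "E1 \<subseteq> E" unfolding E1_def by (rule Collect_restrict)
  have E2E: "E2 \<subseteq> E" unfolding E2_def by (rule Diff_subset)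
  have hs1: "hypersubgraph V1 E1 V E inc" unfolding V1_def
    by (rule hsub_edges[OF H(1) E1E]) (use eE1 in blast)
  have hs2: "hypersubgraph V2 E2 V E inc" unfolding V2_def
    by (rule hsub_edges[OF H(1) E2E]) (use fE2 in blast)
  have E1m: "\<And>h. h \<in> E1 \<longleftrightarrow> h \<in> E \<and> (e,h) \<in> (Rv inc E v)\<^sup>*" unfolding E1_def by simp
  have E2m: "\<And>h. h \<in> E2 \<longleftrightarrow> h \<in> E \<and> h \<notin> E1" unfolding E2_def by simp
  have c1: "hconnected V1 E1 inc"
  proof (rule conn_hconnected)
    show "\<forall>e\<in>E1. inc e \<subseteq> V1" unfolding V1_def Vof_def by blast
    show "\<forall>a\<in>V1. \<forall>b\<in>V1. (a, b) \<in> conn inc E1"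
    proof (intro ballI)
      fix a b assume "a \<in> V1" "b \<in> V1"
      then obtain h1 h2 where "h1 \<in> E1" "h2 \<in> E1" "a \<in> inc h1" "b \<in> inc h2"
        unfolding V1_def Vof_def by blast
      then show "(a, b) \<in> conn inc E1" using class_conn2[OF ef(1), of h1 inc v h2 a b]
        unfolding E1_def by blast
    qed
  qed
  have c2: "hconnected V2 E2 inc"
  proof (rule conn_hconnected)
    show "\<forall>e\<in>E2. inc e \<subseteq> V2" unfolding V2_def Vof_def by blast
    have tov: "(a,v) \<in> conn inc E2" if a: "a \<in> V2" for a
    proof -
      from a obtain g where g: "g \<in> E2" "a \<in> inc g" unfolding V2_def Vof_def by blast
      let ?C = "{h\<in>E. (g,h) \<in> (Rv inc E v)\<^sup>*}"
      have CE2: "?C \<subseteq> E2"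
      proof
        fix h assume h: "h \<in> ?C"
        then have hE: "h \<in> E" and gh: "(g,h) \<in> (Rv inc E v)\<^sup>*" by simp_all
        show "h \<in> E2"
        proof (rule ccontr)
          assume "h \<notin> E2"
          then have "(e,h) \<in> (Rv inc E v)\<^sup>*" using hE E1m E2m by blast
          moreover have "(h,g) \<in> (Rv inc E v)\<^sup>*" by (rule Rv_rtr_sym[OF gh])
          ultimately have "(e,g) \<in> (Rv inc E v)\<^sup>*" by (rule rtrancl_trans)
          then show False using g E1m E2m by blast
        qed
      qed
      have gE: "g \<in> E" using g E2m by blast
      have "e \<notin> E2" using eE1 E2m by blast
      then have "e \<notin> ?C" using CE2 by blast
      then have "E - ?C \<noteq> {}" using ef(1) by blast
      then have "(a,v) \<in> conn inc ?C" by (rule class_reach_v[OF H gE _ g(2)])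
      then show ?thesis by (rule conn_mono[OF CE2])
    qed
    show "\<forall>a\<in>V2. \<forall>b\<in>V2. (a, b) \<in> conn inc E2"
    proof (intro ballI)
      fix a b assume ab: "a \<in> V2" "b \<in> V2"
      have "(a,v) \<in> conn inc E2" "(v,b) \<in> conn inc E2" using tov[OF ab(1)] conn_sym[OF tov[OF ab(2)]] by simp_all
      then show "(a, b) \<in> conn inc E2" by (rule rtrancl_trans)
    qed
  qed
  have inter1: "V1 \<inter> V2 \<subseteq> {v}"
  proof
    fix z assume "z \<in> V1 \<inter> V2"
    then obtain h1 h2 where hh: "h1 \<in> E1" "h2 \<in> E2" "z \<in> inc h1" "z \<in> inc h2"
      unfolding V1_def V2_def Vof_def by blast
    have "(e,h1) \<in> (Rv inc E v)\<^sup>*" "h2 \<in> E" "(e,h2) \<notin> (Rv inc E v)\<^sup>*"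
      using hh E1m E2m by blast+
    then have "z = v" using class_sep[of e h1 inc E v h2 z] ef hh by blast
    then show "z \<in> {v}" by simp
  qed
  have un: "E1 \<union> E2 = E" "E1 \<inter> E2 = {}" using E1E E2m by blast+
  have "V1 \<inter> V2 \<noteq> {}" unfolding V1_def V2_def
    by (rule GAP[OF H un]) (use eE1 fE2 in blast)+
  then have "V1 \<inter> V2 = {v}" using inter1 by blast
  then show ?thesis unfolding separating_vertex_conn_def
    using hs1 hs2 c1 c2 eE1 fE2 un by blast
qed

lemma component_self:
  assumes "hypergraph V E inc" "hconnected V E inc"
  shows "component V E inc V' E' \<longleftrightarrow> V' = V \<and> E' = E"
proof
  assume c: "component V E inc V' E'"
  have "hypersubgraph V E V E inc" using assms unfolding hypersubgraph_def by simp
  moreover have "V' \<subseteq> V" "E' \<subseteq> E" using c unfolding component_def hypersubgraph_def by auto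
  ultimately show "V' = V \<and> E' = E" using c assms(2) unfolding component_def by blast
next
  assume "V' = V \<and> E' = E"
  then show "component V E inc V' E'" using assms
    unfolding component_def hypersubgraph_def by auto
qed

lemma sep_iff:
  assumes "hypergraph V E inc" "hconnected V E inc"
  shows "separating_vertex V E inc v \<longleftrightarrow> separating_vertex_conn V E inc v"
  unfolding separating_vertex_def using component_self[OF assms] by auto

lemma nonsep_iff:
  assumes "hypergraph V E inc" "hconnected V E inc"
  shows "non_separable V E inc \<longleftrightarrow> (\<forall>v. oneclass inc E v)"
proof -
  have "(\<forall>e\<in>E. inc e \<noteq> {})" using edges_ne[OF assms(1)] by blast
  moreover have "(\<exists>v. separating_vertex_conn V E inc v) \<longleftrightarrow> \<not> (\<forall>v. oneclass inc E v)"
  proof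
    assume "\<exists>v. separating_vertex_conn V E inc v"
    then obtain v where "separating_vertex_conn V E inc v" by (elim exE)
    then have "\<not> oneclass inc E v" by (rule sep_conn_not_oneclass)
    then show "\<not> (\<forall>v. oneclass inc E v)" by (elim contrapos_nn allE)
  next
    assume "\<not> (\<forall>v. oneclass inc E v)"
    then obtain v where "\<not> oneclass inc E v" by blast
    then have "separating_vertex_conn V E inc v" by (rule not_oneclass_sep_conn[OF assms])
    then show "\<exists>v. separating_vertex_conn V E inc v" by (rule exI)
  qed
  ultimately show ?thesis unfolding non_separable_def sep_iff[OF assms] using assms(2) by blast
qed

lemma hsub_hyper: "hypersubgraph V' E' V E inc \<Longrightarrow> hypergraph V' E' inc"
  unfolding hypersubgraph_def by blast

lemma block_props:
  assumes "block V E inc VB EB"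
  shows "hypersubgraph VB EB V E inc" "hypergraph VB EB inc" "hconnected VB EB inc"
    "\<And>v. oneclass inc EB v" "VB \<subseteq> V" "EB \<subseteq> E"
proof -
  show hs: "hypersubgraph VB EB V E inc" using assms unfolding block_def by blast
  then show hg: "hypergraph VB EB inc" by (rule hsub_hyper)
  have ns: "non_separable VB EB inc" using assms unfolding block_def by blast
  then show hc: "hconnected VB EB inc" unfolding non_separable_def by blast
  show "\<And>v. oneclass inc EB v" using nonsep_iff[OF hg hc] ns by blast
  show "VB \<subseteq> V" "EB \<subseteq> E" using hs unfolding hypersubgraph_def by auto
qed

lemma block_max:
  assumes "block V E inc VB EB" "hypersubgraph V' E' V E inc" "non_separable V' E' inc"
    "VB \<subseteq> V'" "EB \<subseteq> E'"
  shows "V' = VB \<and> E' = EB"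
  using assms unfolding block_def by blast

lemma conn_empty: "(a,b) \<in> conn inc {} \<Longrightarrow> a = b"
proof -
  have "connrel inc {} = {}" unfolding connrel_def by blast
  then show "(a,b) \<in> conn inc {} \<Longrightarrow> a = b" by simp
qed

lemma hconn_Vof:
  assumes "hconnected V' E' inc" "\<forall>e\<in>E'. inc e \<subseteq> V'" "x \<in> V'" "y \<in> V'" "x \<noteq> y"
  shows "V' = Vof inc E'"
proof
  show "Vof inc E' \<subseteq> V'" using assms(2) unfolding Vof_def by blast
  show "V' \<subseteq> Vof inc E'"
  proof
    fix z assume z: "z \<in> V'"
    obtain w where w: "w \<in> V'" "w \<noteq> z" using assms(3-5) by blast
    have "(w,z) \<in> conn inc E'" by (rule hconnected_conn[OF assms(1) w(1) z])
    then show "z \<in> Vof inc E'" using conn_in_Vof w(2) by metis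
  qed
qed

lemma block_Vof:
  assumes "block V E inc VB EB" "x \<in> VB" "y \<in> VB" "x \<noteq> y"
  shows "VB = Vof inc EB"
proof -
  have "\<forall>e\<in>EB. inc e \<subseteq> VB" using block_props(2)[OF assms(1)] unfolding hypergraph_def by blast
  then show ?thesis using hconn_Vof[OF block_props(3)[OF assms(1)]] assms(2-4) by blast
qed

lemma split_conn:
  assumes "(a,b) \<in> conn inc (P1 \<union> P2)" "a \<in> W" "b \<in> W" "Vof inc P2 \<inter> W \<subseteq> {v}"
    "Vof inc P1 \<subseteq> W"
  shows "(a,b) \<in> conn inc P1"
proof -
  have inW: "\<And>c. (a,c) \<in> conn inc P1 \<Longrightarrow> c \<in> W"
  proof -
    fix c assume ac: "(a,c) \<in> conn inc P1"
    show "c \<in> W"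
    proof (cases "a = c")
      case True then show ?thesis using assms(2) by simp
    next
      case False then have "c \<in> Vof inc P1" using conn_in_Vof[OF ac] by blast
      then show ?thesis using assms(5) by blast
    qed
  qed
  have inv: "(a,c) \<in> conn inc P1 \<or> (c \<in> Vof inc P2 \<and> (a,v) \<in> conn inc P1)"
    if "(a,c) \<in> conn inc (P1 \<union> P2)" for c
    using that
  proof (induction rule: rtrancl_induct)
    case base then show ?case by simp
  next
    case (step c d)
    from step.hyps(2) obtain g where g: "g \<in> P1 \<union> P2" "c \<in> inc g" "d \<in> inc g"
      unfolding connrel_def by blast
    show ?case
    proof (cases "g \<in> P1")
      case True
      then have cd: "(c,d) \<in> conn inc P1" by (rule conn_step[of g P1 c inc d, OF _ g(2) g(3)])
      from step.IH show ?thesis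
      proof
        assume "(a,c) \<in> conn inc P1"
        then have "(a,d) \<in> conn inc P1" using cd by (rule rtrancl_trans)
        then show ?thesis by simp
      next
        assume h: "c \<in> Vof inc P2 \<and> (a,v) \<in> conn inc P1"
        have "c \<in> W" using assms(5) in_Vof[of g P1 c inc, OF True g(2)] by blast
        then have "c = v" using h assms(4) by blast
        then have "(a,c) \<in> conn inc P1" using h by simp
        then have "(a,d) \<in> conn inc P1" using cd by (rule rtrancl_trans)
        then show ?thesis by simp
      qed
    next
      case False
      then have gP2: "g \<in> P2" using g(1) by blast
      then have dP2: "d \<in> Vof inc P2" "c \<in> Vof inc P2" using in_Vof[of g P2 d inc, OF gP2 g(3)] in_Vof[of g P2 c inc, OF gP2 g(2)] by simp_all
      from step.IH have "(a,v) \<in> conn inc P1"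
      proof
        assume ac: "(a,c) \<in> conn inc P1"
        then have "c \<in> W" by (rule inW)
        then have "c = v" using dP2(2) assms(4) by blast
        then show ?thesis using ac by simp
      qed blast
      then show ?thesis using dP2(1) by blast
    qed
  qed
  from inv[OF assms(1)] show ?thesis
  proof
    assume h: "b \<in> Vof inc P2 \<and> (a,v) \<in> conn inc P1"
    then have "b = v" using assms(3,4) by blast
    then show ?thesis using h by simp
  qed
qed

lemma max_lemma:
  assumes H: "hypergraph V E inc" and B: "block V E inc VB EB"
    and xy: "x \<in> VB" "y \<in> VB" "x \<noteq> y" "(x,y) \<in> conn inc (E - EB)"
  shows False
proof -
  define Good where "Good P \<longleftrightarrow> P \<subseteq> E - EB \<and>
     (\<exists>x y. x \<in> VB \<and> y \<in> VB \<and> x \<noteq> y \<and> (x,y) \<in> conn inc P)" for P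
  have "Good (E - EB)" unfolding Good_def using xy by blast
  then obtain P where gP: "Good P" and minP: "\<And>P'. Good P' \<Longrightarrow> card P \<le> card P'"
    using ex_has_least_nat[of Good "E - EB" card] by blast
  from gP obtain x' y' where P: "P \<subseteq> E - EB" "x' \<in> VB" "y' \<in> VB" "x' \<noteq> y'" "(x',y') \<in> conn inc P"
    unfolding Good_def by blast
  have finE: "finite E" using H unfolding hypergraph_def by blast
  have finP: "finite P" using P(1) finE finite_subset by blast
  have VBeq: "VB = Vof inc EB" by (rule block_Vof[OF B xy(1-3)])
  obtain e0 where e0: "e0 \<in> EB" using VBeq xy(1) unfolding Vof_def by blast
  have Pne: "P \<noteq> {}" using P(4,5) conn_empty by metis
  have EBE: "EB \<subseteq> E" by (rule block_props(6)[OF B])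
  define EB' where "EB' = EB \<union> P"
  have EB'E: "EB' \<subseteq> E" using EBE P(1) unfolding EB'_def by blast
  have all: "(e0,h) \<in> (Rv inc EB' v)\<^sup>*" if h: "h \<in> EB'" for h v
  proof -
    define Q where "Q = {h \<in> EB'. (e0,h) \<in> (Rv inc EB' v)\<^sup>*}"
    have Qm: "\<And>h. h \<in> Q \<longleftrightarrow> h \<in> EB' \<and> (e0,h) \<in> (Rv inc EB' v)\<^sup>*" unfolding Q_def by simp
    have EBQ: "EB \<subseteq> Q"
    proof
      fix h assume hEB: "h \<in> EB"
      have "(e0,h) \<in> (Rv inc EB v)\<^sup>*" using block_props(4)[OF B] e0 hEB unfolding oneclass_def by blast
      then have "(e0,h) \<in> (Rv inc EB' v)\<^sup>*" by (rule Rv_rtr_mono[rotated]) (simp add: EB'_def)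
      then show "h \<in> Q" using Qm hEB unfolding EB'_def by blast
    qed
    define P1 where "P1 = P \<inter> Q"
    define P2 where "P2 = P - Q"
    have e0': "e0 \<in> EB'" using e0 unfolding EB'_def by blast
    have sep: "Vof inc P2 \<inter> Vof inc Q \<subseteq> {v}"
    proof
      fix z assume "z \<in> Vof inc P2 \<inter> Vof inc Q"
      then obtain g2 h1 where gh: "g2 \<in> P2" "h1 \<in> Q" "z \<in> inc g2" "z \<in> inc h1"
        unfolding Vof_def by blast
      have "g2 \<in> EB'" "(e0,g2) \<notin> (Rv inc EB' v)\<^sup>*" using gh(1) Qm unfolding P2_def EB'_def by blast+
      moreover have "(e0,h1) \<in> (Rv inc EB' v)\<^sup>*" using gh(2) Qm by blast
      ultimately have "z = v" using class_sep[of e0 h1 inc EB' v g2 z] e0' gh by blast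
      then show "z \<in> {v}" by simp
    qed
    have sub1: "Vof inc P1 \<subseteq> Vof inc Q" by (rule Vof_mono) (simp add: P1_def)
    have PU: "P = P1 \<union> P2" unfolding P1_def P2_def by blast
    have "VB \<subseteq> Vof inc Q" using VBeq Vof_mono[OF EBQ] by simp
    then have xW: "x' \<in> Vof inc Q" "y' \<in> Vof inc Q" using P(2,3) by (simp_all add: subset_iff)
    have "(x',y') \<in> conn inc P1"
      by (rule split_conn[OF _ xW sep sub1]) (use P(5) PU in simp)
    then have "Good P1" unfolding Good_def using P(1-4) unfolding P1_def by blast
    then have "card P \<le> card P1" by (rule minP)
    then have "P1 = P" using card_seteq[OF finP] unfolding P1_def by blast
    then have "P \<subseteq> Q" unfolding P1_def by blast
    then have "h \<in> Q" using h EBQ unfolding EB'_def by blast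
    then show ?thesis using Qm by blast
  qed
  have one: "oneclass inc EB' v" for v
    unfolding oneclass_def
  proof (intro ballI)
    fix g h assume "g \<in> EB'" "h \<in> EB'"
    then have "(e0,g) \<in> (Rv inc EB' v)\<^sup>*" "(e0,h) \<in> (Rv inc EB' v)\<^sup>*" using all by blast+
    then show "(g,h) \<in> (Rv inc EB' v)\<^sup>*" using Rv_rtr_sym rtrancl_trans by metis
  qed
  have e0': "e0 \<in> EB'" using e0 unfolding EB'_def by blast
  have hs: "hypersubgraph (Vof inc EB') EB' V E inc" by (rule hsub_edges[OF H EB'E]) (use e0' in blast)
  then have hg: "hypergraph (Vof inc EB') EB' inc" by (rule hsub_hyper)
  have hc: "hconnected (Vof inc EB') EB' inc"
  proof (rule conn_hconnected)
    show "\<forall>e\<in>EB'. inc e \<subseteq> Vof inc EB'" unfolding Vof_def by blast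
    show "\<forall>a\<in>Vof inc EB'. \<forall>b\<in>Vof inc EB'. (a, b) \<in> conn inc EB'"
    proof (intro ballI)
      fix a b assume "a \<in> Vof inc EB'" "b \<in> Vof inc EB'"
      then obtain h1 h2 where hh: "h1 \<in> EB'" "h2 \<in> EB'" "a \<in> inc h1" "b \<in> inc h2"
        unfolding Vof_def by blast
      have "h1 \<in> {h\<in>EB'. (e0,h) \<in> (Rv inc EB' x)\<^sup>*}" "h2 \<in> {h\<in>EB'. (e0,h) \<in> (Rv inc EB' x)\<^sup>*}"
        using hh all by blast+
      from class_conn2[OF e0' this hh(3,4)]
      show "(a, b) \<in> conn inc EB'" by (rule conn_mono[rotated]) blast
    qed
  qed
  have ns: "non_separable (Vof inc EB') EB' inc" using nonsep_iff[OF hg hc] one by blast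
  have "VB \<subseteq> Vof inc EB'" using VBeq Vof_mono[of EB EB' inc] unfolding EB'_def by blast
  then have "EB' = EB" using block_max[OF B hs ns] unfolding EB'_def by blast
  then show False using P(1) Pne unfolding EB'_def by blast
qed

lemma block_unique:
  assumes H: "hypergraph V E inc" and B1: "block V E inc VB1 EB1" and B2: "block V E inc VB2 EB2"
    and e: "e \<in> EB1" "e \<in> EB2"
  shows "VB1 = VB2 \<and> EB1 = EB2"
proof -
  have g1: "hypergraph VB1 EB1 inc" by (rule block_props(2)[OF B1])
  have g2: "hypergraph VB2 EB2 inc" by (rule block_props(2)[OF B2])
  have fin: "finite (VB1 \<union> VB2)" "finite (EB1 \<union> EB2)" using g1 g2 unfolding hypergraph_def by auto
  have sub: "VB1 \<union> VB2 \<subseteq> V" "EB1 \<union> EB2 \<subseteq> E" using block_props(5,6)[OF B1] block_props(5,6)[OF B2] by auto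
  have edges: "\<forall>g\<in>EB1 \<union> EB2. inc g \<subseteq> VB1 \<union> VB2 \<and> inc g \<noteq> {}" using g1 g2 unfolding hypergraph_def by blast
  have ne: "VB1 \<union> VB2 \<noteq> {}" using g1 unfolding hypergraph_def by blast
  have hg: "hypergraph (VB1 \<union> VB2) (EB1 \<union> EB2) inc" unfolding hypergraph_def using fin edges ne by blast
  have hs: "hypersubgraph (VB1 \<union> VB2) (EB1 \<union> EB2) V E inc" unfolding hypersubgraph_def using hg sub by blast
  obtain c where c: "c \<in> inc e" using edges e by blast
  have c1: "c \<in> VB1" "c \<in> VB2" using c e g1 g2 unfolding hypergraph_def by blast+
  have toc: "(a,c) \<in> conn inc (EB1 \<union> EB2)" if a: "a \<in> VB1 \<union> VB2" for a
  proof (cases "a \<in> VB1")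
    case True
    have "(a,c) \<in> conn inc EB1" by (rule hconnected_conn[OF block_props(3)[OF B1] True c1(1)])
    then show ?thesis by (rule conn_mono[rotated]) blast
  next
    case False
    then have a2: "a \<in> VB2" using a by blast
    have "(a,c) \<in> conn inc EB2" by (rule hconnected_conn[OF block_props(3)[OF B2] a2 c1(2)])
    then show ?thesis by (rule conn_mono[rotated]) blast
  qed
  have hc: "hconnected (VB1 \<union> VB2) (EB1 \<union> EB2) inc"
  proof (rule conn_hconnected)
    show "\<forall>e\<in>EB1 \<union> EB2. inc e \<subseteq> VB1 \<union> VB2" using edges by blast
    show "\<forall>a\<in>VB1 \<union> VB2. \<forall>b\<in>VB1 \<union> VB2. (a, b) \<in> conn inc (EB1 \<union> EB2)"
    proof (intro ballI)
      fix a b assume "a \<in> VB1 \<union> VB2" "b \<in> VB1 \<union> VB2"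
      then have "(a,c) \<in> conn inc (EB1 \<union> EB2)" "(c,b) \<in> conn inc (EB1 \<union> EB2)"
        using toc conn_sym[OF toc[of b]] by simp_all
      then show "(a, b) \<in> conn inc (EB1 \<union> EB2)" by (rule rtrancl_trans)
    qed
  qed
  have toe: "(g,e) \<in> (Rv inc (EB1 \<union> EB2) v)\<^sup>*" if g: "g \<in> EB1 \<union> EB2" for g v
  proof (cases "g \<in> EB1")
    case True
    have "(g,e) \<in> (Rv inc EB1 v)\<^sup>*" using block_props(4)[OF B1, of v] True e(1) unfolding oneclass_def by blast
    then show ?thesis by (rule Rv_rtr_mono[rotated]) blast
  next
    case False
    then have "g \<in> EB2" using g by blast
    then have "(g,e) \<in> (Rv inc EB2 v)\<^sup>*" using block_props(4)[OF B2, of v] e(2) unfolding oneclass_def by blast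
    then show ?thesis by (rule Rv_rtr_mono[rotated]) blast
  qed
  have one: "oneclass inc (EB1 \<union> EB2) v" for v
    unfolding oneclass_def
  proof (intro ballI)
    fix g h assume "g \<in> EB1 \<union> EB2" "h \<in> EB1 \<union> EB2"
    then have "(g,e) \<in> (Rv inc (EB1 \<union> EB2) v)\<^sup>*" "(e,h) \<in> (Rv inc (EB1 \<union> EB2) v)\<^sup>*"
      using toe[of g v] Rv_rtr_sym[OF toe[of h v]] by simp_all
    then show "(g,h) \<in> (Rv inc (EB1 \<union> EB2) v)\<^sup>*" by (rule rtrancl_trans)
  qed
  have ns: "non_separable (VB1 \<union> VB2) (EB1 \<union> EB2) inc" using nonsep_iff[OF hg hc] one by blast
  have "VB1 \<union> VB2 = VB1 \<and> EB1 \<union> EB2 = EB1" by (rule block_max[OF B1 hs ns]) blast+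
  moreover have "VB1 \<union> VB2 = VB2 \<and> EB1 \<union> EB2 = EB2" by (rule block_max[OF B2 hs ns]) blast+
  ultimately show ?thesis by blast
qed

lemma single_edge_nonsep:
  assumes H: "hypergraph V E inc" and g: "g \<in> E"
  shows "hypersubgraph (inc g) {g} V E inc" "non_separable (inc g) {g} inc"
proof -
  have vg: "Vof inc {g} = inc g" unfolding Vof_def by simp
  show hs: "hypersubgraph (inc g) {g} V E inc" using hsub_edges[OF H, of "{g}"] g vg by simp
  then have hg: "hypergraph (inc g) {g} inc" by (rule hsub_hyper)
  have hc: "hconnected (inc g) {g} inc"
    by (rule conn_hconnected) (auto intro: conn_step)
  have "oneclass inc {g} v" for v unfolding oneclass_def by simp
  then show "non_separable (inc g) {g} inc" using nonsep_iff[OF hg hc] by blast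
qed

lemma edge_in_block:
  assumes H: "hypergraph V E inc" and g: "g \<in> E"
  shows "\<exists>VB EB. block V E inc VB EB \<and> g \<in> EB"
proof -
  define Cand where "Cand X \<longleftrightarrow> hypersubgraph (fst X) (snd X) V E inc \<and> non_separable (fst X) (snd X) inc \<and> g \<in> snd X" for X
  define m where "m X = card V + card E - (card (fst X) + card (snd X))" for X :: "'a set \<times> 'b set"
  have "Cand (inc g, {g})" unfolding Cand_def using single_edge_nonsep[OF H g] by simp
  then obtain X where X: "Cand X" and minX: "\<And>Y. Cand Y \<Longrightarrow> m X \<le> m Y"
    using ex_has_least_nat[of Cand "(inc g, {g})" m] by blast
  have fin: "finite V" "finite E" using H unfolding hypergraph_def by auto
  have cardle: "card (fst Y) \<le> card V" "card (snd Y) \<le> card E" if "Cand Y" for Y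
    using that fin card_mono unfolding Cand_def hypersubgraph_def by blast+
  have mx: "\<forall>V' E'. hypersubgraph V' E' V E inc \<and> non_separable V' E' inc \<and> fst X \<subseteq> V' \<and> snd X \<subseteq> E' \<longrightarrow> V' = fst X \<and> E' = snd X"
  proof (intro allI impI)
    fix V' E' assume a: "hypersubgraph V' E' V E inc \<and> non_separable V' E' inc \<and> fst X \<subseteq> V' \<and> snd X \<subseteq> E'"
    then have CY: "Cand (V',E')" using X unfolding Cand_def by auto
    have f': "finite V'" "finite E'" using a fin finite_subset unfolding hypersubgraph_def by blast+
    have c1: "card (fst X) \<le> card V'" "card (snd X) \<le> card E'" using a f' card_mono by blast+
    have "m X \<le> m (V',E')" by (rule minX[OF CY])
    then have "card V' + card E' \<le> card (fst X) + card (snd X)"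
      using cardle[OF CY] cardle[OF X] unfolding m_def by simp
    then have "card V' \<le> card (fst X)" "card E' \<le> card (snd X)" using c1 by linarith+
    then show "V' = fst X \<and> E' = snd X" using card_seteq[OF f'(1)] card_seteq[OF f'(2)] a by blast
  qed
  have "block V E inc (fst X) (snd X)"
    unfolding block_def using mx X unfolding Cand_def by blast
  then show ?thesis using X unfolding Cand_def by blast
qed

lemma block_exists:
  assumes H: "hypergraph V E inc"
  shows "\<exists>VB EB. block V E inc VB EB"
proof (cases "E = {}")
  case False
  then show ?thesis using edge_in_block[OF H] by blast
next
  case True
  obtain v where v: "v \<in> V" using H unfolding hypergraph_def by blast
  have hs: "hypersubgraph {v} {} V E inc" using v H unfolding hypersubgraph_def hypergraph_def by auto
  have hg: "hypergraph {v} {} inc" by (rule hsub_hyper[OF hs])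
  have hc: "hconnected {v} {} inc" unfolding hconnected_def by blast
  have ns: "non_separable {v} {} inc" using nonsep_iff[OF hg hc] unfolding oneclass_def by blast
  have mx: "\<forall>V' E'. hypersubgraph V' E' V E inc \<and> non_separable V' E' inc \<and> {v} \<subseteq> V' \<and> {} \<subseteq> E' \<longrightarrow> V' = {v} \<and> E' = {}"
  proof (intro allI impI)
    fix V' E' assume a: "hypersubgraph V' E' V E inc \<and> non_separable V' E' inc \<and> {v} \<subseteq> V' \<and> {} \<subseteq> E'"
    then have E': "E' = {}" using True unfolding hypersubgraph_def by blast
    have "w = v" if "w \<in> V'" for w
    proof -
      have "(v,w) \<in> conn inc E'" using hconnected_conn[of V' E' inc v w] a that
        unfolding non_separable_def by blast
      then show ?thesis using conn_empty E' by metis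
    qed
    then show "V' = {v} \<and> E' = {}" using a E' by blast
  qed
  have "block V E inc {v} {}" unfolding block_def using mx hs ns by blast
  then show ?thesis by blast
qed

lemma block_edges_ne:
  assumes H: "hypergraph V E inc" and B: "block V E inc VB EB" and v: "v \<in> VB" "v \<in> Vof inc E"
  shows "EB \<noteq> {}"
proof
  assume EB: "EB = {}"
  have VB: "VB = {v}"
  proof -
    have "w = v" if "w \<in> VB" for w
    proof -
      have "(v,w) \<in> conn inc EB" by (rule hconnected_conn[OF block_props(3)[OF B] v(1) that])
      then show ?thesis using conn_empty EB by metis
    qed
    then show ?thesis using v by blast
  qed
  obtain g where g: "g \<in> E" "v \<in> inc g" using v(2) unfolding Vof_def by blast
  have "inc g = VB \<and> {g} = EB"
    by (rule block_max[OF B single_edge_nonsep[OF H g(1)]]) (use VB g EB in auto)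
  then show False using EB by blast
qed

lemma block_sep:
  assumes H: "hypergraph V E inc" "hconnected V E inc"
    and B1: "block V E inc VB1 EB1" and B2: "block V E inc VB2 EB2"
    and d: "\<not> (VB1 = VB2 \<and> EB1 = EB2)"
    and x: "x \<in> VB1" "x \<in> VB2"
    and m1: "y1 \<in> VB1" "x \<noteq> y1" and m2: "y2 \<in> VB2" "x \<noteq> y2"
  shows "separating_vertex V E inc x"
proof -
  have V1: "VB1 = Vof inc EB1" by (rule block_Vof[OF B1 x(1) m1])
  have V2: "VB2 = Vof inc EB2" by (rule block_Vof[OF B2 x(2) m2])
  obtain e where e: "e \<in> EB1" "x \<in> inc e" using x(1) V1 unfolding Vof_def by blast
  obtain f where f: "f \<in> EB2" "x \<in> inc f" using x(2) V2 unfolding Vof_def by blast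
  have fn: "f \<notin> EB1" using block_unique[OF H(1) B1 B2 _ f(1)] d by blast
  have EB1E: "EB1 \<subseteq> E" by (rule block_props(6)[OF B1])
  have inv: "h \<in> EB1 \<or> (\<exists>y\<in>VB1. y \<noteq> x \<and> (\<forall>w\<in>inc h. (y,w) \<in> conn inc (E - EB1)))"
    if "(e,h) \<in> (Rv inc E x)\<^sup>*" for h
    using that
  proof (induction rule: rtrancl_induct)
    case base then show ?case using e by simp
  next
    case (step h h')
    from step.hyps(2) obtain z where z: "z \<noteq> x" "z \<in> inc h" "z \<in> inc h'" "h' \<in> E" unfolding Rv_def by blast
    show ?case
    proof (cases "h' \<in> EB1")
      case True then show ?thesis by simp
    next
      case False
      then have h'D: "h' \<in> E - EB1" using z by blast
      have zw: "\<forall>w\<in>inc h'. (z,w) \<in> conn inc (E - EB1)" using conn_step[of h' "E - EB1" z inc] h'D z(3) by blast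
      from step.IH show ?thesis
      proof
        assume "h \<in> EB1"
        then have "z \<in> VB1" using V1 in_Vof[of h EB1 z inc] z(2) by simp
        then show ?thesis using zw z(1) by blast
      next
        assume "\<exists>y\<in>VB1. y \<noteq> x \<and> (\<forall>w\<in>inc h. (y,w) \<in> conn inc (E - EB1))"
        then obtain y where y: "y \<in> VB1" "y \<noteq> x" "(y,z) \<in> conn inc (E - EB1)" using z(2) by blast
        have "\<forall>w\<in>inc h'. (y,w) \<in> conn inc (E - EB1)" using zw rtrancl_trans[OF y(3)] by blast
        then show ?thesis using y(1,2) by blast
      qed
    qed
  qed
  show ?thesis
  proof (rule ccontr)
    assume "\<not> separating_vertex V E inc x"
    then have "\<not> separating_vertex_conn V E inc x" using sep_iff[OF H] by blast
    then have "oneclass inc E x" using not_oneclass_sep_conn[OF H] by blast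
    then have "(e,f) \<in> (Rv inc E x)\<^sup>*" using e(1) f(1) EB1E block_props(6)[OF B2] unfolding oneclass_def by blast
    from inv[OF this] fn obtain y where y: "y \<in> VB1" "y \<noteq> x" "(y,x) \<in> conn inc (E - EB1)"
      using f(2) by blast
    show False by (rule max_lemma[OF H(1) B1 y(1) x(1) y(2) y(3)])
  qed
qed

fun chain :: "'v \<Rightarrow> ('v \<times> 'e \<times> 'v) list \<Rightarrow> 'v \<Rightarrow> bool" where
  "chain a [] b \<longleftrightarrow> a = b"
| "chain a ((u,e,w) # S) b \<longleftrightarrow> u = a \<and> chain w S b"

definition edg :: "'v \<times> 'e \<times> 'v \<Rightarrow> 'e" where "edg s = fst (snd s)"
definition tgt :: "'v \<times> 'e \<times> 'v \<Rightarrow> 'v" where "tgt s = snd (snd s)"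

definition vstep :: "'v set \<Rightarrow> 'e set \<Rightarrow> ('e \<Rightarrow> 'v set) \<Rightarrow> 'v \<times> 'e \<times> 'v \<Rightarrow> bool" where
  "vstep V E inc s \<longleftrightarrow> edg s \<in> E \<and> fst s \<noteq> tgt s \<and> fst s \<in> inc (edg s) \<and> tgt s \<in> inc (edg s)
     \<and> fst s \<in> V \<and> tgt s \<in> V"

definition ctr :: "'v set \<Rightarrow> 'e set \<Rightarrow> ('e \<Rightarrow> 'v set) \<Rightarrow> ('v \<times> 'e \<times> 'v) list \<Rightarrow> bool" where
  "ctr V E inc S \<longleftrightarrow> S \<noteq> [] \<and> (\<forall>s\<in>set S. vstep V E inc s) \<and> (\<exists>a. chain a S a) \<and> distinct (map edg S)"

definition toVE :: "('v \<times> 'e \<times> 'v) list \<Rightarrow> 'v list \<times> 'e list" where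
  "toVE S = (map fst S @ [fst (hd S)], map edg S)"

lemma chain_append: "chain a (S1 @ S2) b \<longleftrightarrow> (\<exists>m. chain a S1 m \<and> chain m S2 b)"
proof (induction S1 arbitrary: a)
  case Nil then show ?case by simp
next
  case (Cons s S1)
  obtain u e w where s: "s = (u,e,w)" by (cases s) auto
  show ?case using Cons[of w] s by auto
qed

lemma chain_hd: "chain a S b \<Longrightarrow> S \<noteq> [] \<Longrightarrow> fst (hd S) = a"
  by (cases S) auto

lemma chain_Cons: "chain a (s # S) b \<longleftrightarrow> fst s = a \<and> chain (tgt s) S b"
  by (cases s) (auto simp: tgt_def)

lemma chain_nth: "chain a S b \<Longrightarrow> Suc i < length S \<Longrightarrow> tgt (S ! i) = fst (S ! Suc i)"
proof (induction S arbitrary: a i)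
  case Nil then show ?case by simp
next
  case (Cons s S)
  then have c: "chain (tgt s) S b" by (simp add: chain_Cons)
  show ?case
  proof (cases i)
    case 0
    then show ?thesis using c Cons.prems chain_hd[OF c] by (cases S) auto
  next
    case (Suc j)
    then show ?thesis using Cons.IH[OF c, of j] Cons.prems by simp
  qed
qed

lemma chain_last: "chain a S b \<Longrightarrow> S \<noteq> [] \<Longrightarrow> tgt (last S) = b"
proof (induction S arbitrary: a)
  case Nil then show ?case by simp
next
  case (Cons s S)
  then have c: "chain (tgt s) S b" by (simp add: chain_Cons)
  show ?case
  proof (cases "S = []")
    case True then show ?thesis using c by simp
  next
    case False then show ?thesis using Cons.IH[OF c] by simp
  qed
qed

lemma ctr_len: assumes "ctr V E inc S" shows "length S \<ge> 2"
proof (rule ccontr)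
  assume "\<not> length S \<ge> 2"
  moreover have "S \<noteq> []" using assms unfolding ctr_def by blast
  ultimately have "length S = 1" by (simp add: not_le) (metis One_nat_def less_2_cases length_0_conv)
  then obtain s where S: "S = [s]" by (metis One_nat_def length_0_conv length_Suc_conv)
  obtain a where "chain a S a" using assms unfolding ctr_def by blast
  then have "fst s = tgt s" using S by (simp add: chain_Cons)
  moreover have "vstep V E inc s" using assms S unfolding ctr_def by simp
  ultimately show False unfolding vstep_def by simp
qed

lemma ctr_chain_hd: "ctr V E inc S \<Longrightarrow> chain (fst (hd S)) S (fst (hd S))"
  unfolding ctr_def using chain_hd by metis

lemma toVE_sets: "S \<noteq> [] \<Longrightarrow> set (fst (toVE S)) = fst ` set S" "set (snd (toVE S)) = edg ` set S"
proof -
  assume "S \<noteq> []"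
  then have "fst (hd S) \<in> fst ` set S" by simp
  then show "set (fst (toVE S)) = fst ` set S" unfolding toVE_def by auto
qed (simp add: toVE_def)

lemma ctr_toVE:
  assumes "ctr V E inc S"
  shows "closed_strict_trail V E inc (fst (toVE S)) (snd (toVE S))"
proof -
  define vs where "vs = map fst S @ [fst (hd S)]"
  define es where "es = map edg S"
  have ne: "S \<noteq> []" using assms unfolding ctr_def by blast
  have ch: "chain (fst (hd S)) S (fst (hd S))" by (rule ctr_chain_hd[OF assms])
  have vs_i: "vs ! i = fst (S ! i)" if "i < length S" for i
    using that unfolding vs_def by (simp add: nth_append)
  have vs_Suc: "vs ! Suc i = tgt (S ! i)" if "i < length S" for i
  proof (cases "Suc i < length S")
    case True
    then show ?thesis using chain_nth[OF ch True] vs_i by simp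
  next
    case False
    then have i: "i = length S - 1" "Suc i = length S" using that by auto
    have "tgt (last S) = fst (hd S)" by (rule chain_last[OF ch ne])
    moreover have "last S = S ! i" using i ne by (simp add: last_conv_nth)
    ultimately show ?thesis unfolding vs_def using i by (simp add: nth_append)
  qed
  have vst: "\<forall>s\<in>set S. vstep V E inc s" using assms unfolding ctr_def by blast
  have w: "walk V E inc vs es"
    unfolding walk_def
  proof (intro conjI)
    show "length vs = Suc (length es)" unfolding vs_def es_def by simp
    show "set vs \<subseteq> V" unfolding vs_def using vst ne unfolding vstep_def by auto
    show "\<forall>i<length es. es ! i \<in> E \<and> vs ! i \<noteq> vs ! Suc i \<and> vs ! i \<in> inc (es ! i) \<and> vs ! Suc i \<in> inc (es ! i)"
    proof (intro allI impI)
      fix i assume "i < length es"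
      then have i: "i < length S" unfolding es_def by simp
      then have "vstep V E inc (S ! i)" using vst by simp
      then show "es ! i \<in> E \<and> vs ! i \<noteq> vs ! Suc i \<and> vs ! i \<in> inc (es ! i) \<and> vs ! Suc i \<in> inc (es ! i)"
        using vs_i[OF i] vs_Suc[OF i] i unfolding es_def vstep_def by simp
    qed
  qed
  have "closed_walk vs es" unfolding closed_walk_def vs_def es_def using ctr_len[OF assms] ne by (cases S) auto
  moreover have "distinct es" using assms unfolding ctr_def es_def by blast
  ultimately show ?thesis using w unfolding closed_strict_trail_def toVE_def vs_def es_def by simp
qed

lemma chain_upt:
  "k \<le> n \<Longrightarrow> chain (vs ! k) (map (\<lambda>i. (vs ! i, es ! i, vs ! Suc i)) [k..<n]) (vs ! n)"
proof (induction "n - k" arbitrary: k)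
  case 0 then show ?case by simp
next
  case (Suc d)
  then have k: "k < n" by simp
  have "[k..<n] = k # [Suc k..<n]" using k by (simp add: upt_conv_Cons)
  then show ?case using Suc.hyps(1)[of "Suc k"] Suc.hyps(2) k by simp
qed

lemma cst_toS:
  assumes "closed_strict_trail V E inc vs es"
  shows "\<exists>S. ctr V E inc S \<and> toVE S = (vs, es)"
proof -
  define n where "n = length es"
  define S where "S = map (\<lambda>i. (vs ! i, es ! i, vs ! Suc i)) [0..<n]"
  have w: "walk V E inc vs es" and cw: "closed_walk vs es" and d: "distinct es"
    using assms unfolding closed_strict_trail_def by auto
  have len: "length vs = Suc n" using w unfolding walk_def n_def by simp
  have n2: "n \<ge> 2" using cw unfolding closed_walk_def n_def by simp
  have hdl: "vs ! 0 = vs ! n"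
  proof -
    have "hd vs = vs ! 0" using len by (cases vs) auto
    moreover have "last vs = vs ! n" using len by (metis diff_Suc_1 last_conv_nth list.size(3) nat.distinct(1))
    ultimately show ?thesis using cw unfolding closed_walk_def by simp
  qed
  have ne: "S \<noteq> []" unfolding S_def using n2 by simp
  have ch: "chain (vs ! 0) S (vs ! 0)" using chain_upt[of 0 n vs es] hdl unfolding S_def by simp
  have es_eq: "map edg S = es" unfolding S_def n_def edg_def by (intro nth_equalityI) auto
  have vst: "\<forall>s\<in>set S. vstep V E inc s"
  proof
    fix s assume "s \<in> set S"
    then obtain i where i: "i < n" "s = (vs ! i, es ! i, vs ! Suc i)" unfolding S_def by auto
    have "es ! i \<in> E \<and> vs ! i \<noteq> vs ! Suc i \<and> vs ! i \<in> inc (es ! i) \<and> vs ! Suc i \<in> inc (es ! i)"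
      using w i unfolding walk_def n_def by blast
    moreover have "vs ! i \<in> V" "vs ! Suc i \<in> V" using w i len unfolding walk_def
      by (metis Suc_mono less_SucI nth_mem subsetD)+
    ultimately show "vstep V E inc s" unfolding vstep_def edg_def tgt_def using i by simp
  qed
  have ctr: "ctr V E inc S" unfolding ctr_def using ne vst ch d es_eq by auto
  have "map fst S = take n vs" unfolding S_def using len
    by (intro nth_equalityI) auto
  moreover have "fst (hd S) = vs ! n" unfolding S_def using n2 hdl by (simp add: upt_conv_Cons)
  ultimately have "map fst S @ [fst (hd S)] = vs" using len
    by (metis lessI take_Suc_conv_app_nth take_all_iff le_refl)
  then have "toVE S = (vs, es)" unfolding toVE_def using es_eq by simp
  then show ?thesis using ctr by blast
qed

lemma ctr_rotate:
  assumes "ctr V E inc S" "s \<in> set S"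
  shows "\<exists>S'. ctr V E inc S' \<and> set S' = set S \<and> chain (fst s) S' (fst s)"
proof -
  obtain S1 S2 where sp: "S = S1 @ s # S2" using split_list[OF assms(2)] by blast
  obtain a where ch: "chain a S a" using assms(1) unfolding ctr_def by blast
  then obtain m where m: "chain a S1 m" "chain m (s # S2) a" using sp by (auto simp: chain_append)
  have mm: "m = fst s" using m(2) by (simp add: chain_Cons)
  have "chain (fst s) ((s # S2) @ S1) (fst s)" unfolding chain_append using m mm by blast
  moreover have "distinct (map edg ((s # S2) @ S1))" using assms(1) sp unfolding ctr_def by auto
  moreover have "set ((s # S2) @ S1) = set S" using sp by auto
  ultimately show ?thesis using assms(1) unfolding ctr_def by (metis Nil_is_append_conv list.distinct(1))
qed

lemma filt_aux:
  assumes H: "hypergraph V E inc" and B: "block V E inc VB EB"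
    and vst: "\<forall>s\<in>set S. vstep V E inc s" and ch: "chain a S b" and b: "b \<in> VB"
  shows "(filter (\<lambda>s. edg s \<in> EB) S = [] \<longrightarrow> (a,b) \<in> conn inc (E - EB)) \<and>
         (filter (\<lambda>s. edg s \<in> EB) S \<noteq> [] \<longrightarrow>
            (a, fst (hd (filter (\<lambda>s. edg s \<in> EB) S))) \<in> conn inc (E - EB) \<and>
            chain (fst (hd (filter (\<lambda>s. edg s \<in> EB) S))) (filter (\<lambda>s. edg s \<in> EB) S) b)"
  using vst ch
proof (induction S arbitrary: a)
  case Nil then show ?case by simp
next
  case (Cons s S)
  let ?P = "\<lambda>s. edg s \<in> EB"
  have vs: "vstep V E inc s" and vst': "\<forall>s\<in>set S. vstep V E inc s" using Cons.prems by auto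
  have sa: "fst s = a" and ch': "chain (tgt s) S b" using Cons.prems(2) by (simp_all add: chain_Cons)
  note IH = Cons.IH[OF vst' ch']
  have incB: "\<And>e. e \<in> EB \<Longrightarrow> inc e \<subseteq> VB" using block_props(2)[OF B] unfolding hypergraph_def by blast
  show ?case
  proof (cases "edg s \<in> EB")
    case True
    have tV: "tgt s \<in> VB" using True incB vs unfolding vstep_def by blast
    have "chain (tgt s) (filter ?P S) b"
    proof (cases "filter ?P S = []")
      case True
      then have "(tgt s, b) \<in> conn inc (E - EB)" using IH by blast
      then have "tgt s = b" using max_lemma[OF H B tV b] by blast
      then show ?thesis using True by simp
    next
      case False
      then have c1: "(tgt s, fst (hd (filter ?P S))) \<in> conn inc (E - EB)"
        and c2: "chain (fst (hd (filter ?P S))) (filter ?P S) b" using IH by blast+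
      have "hd (filter ?P S) \<in> set (filter ?P S)" using False by (rule hd_in_set)
      then have "hd (filter ?P S) \<in> {x \<in> set S. ?P x}" by (simp only: set_filter)
      then have hm: "hd (filter ?P S) \<in> set S" "edg (hd (filter ?P S)) \<in> EB" by simp_all
      then have "fst (hd (filter ?P S)) \<in> VB" using vst' incB unfolding vstep_def by blast
      then have "tgt s = fst (hd (filter ?P S))" using max_lemma[OF H B tV _ _ c1] by blast
      then show ?thesis using c2 by simp
    qed
    then show ?thesis using True sa by (simp add: chain_Cons)
  next
    case False
    have "edg s \<in> E - EB" using False vs unfolding vstep_def by blast
    then have st: "(a, tgt s) \<in> conn inc (E - EB)" using conn_step[of "edg s" "E - EB" a inc "tgt s"] vs sa
      unfolding vstep_def by blast
    show ?thesis using IH False st by (auto intro: rtrancl_trans)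
  qed
qed

lemma filt_chain:
  assumes H: "hypergraph V E inc" and B: "block V E inc VB EB"
    and vst: "\<forall>s\<in>set S. vstep V E inc s" and ch: "chain a S b" and a: "a \<in> VB" and b: "b \<in> VB"
  shows "chain a (filter (\<lambda>s. edg s \<in> EB) S) b"
proof -
  let ?F = "filter (\<lambda>s. edg s \<in> EB) S"
  note aux = filt_aux[OF H B vst ch b]
  have incB: "\<And>e. e \<in> EB \<Longrightarrow> inc e \<subseteq> VB" using block_props(2)[OF B] unfolding hypergraph_def by blast
  show ?thesis
  proof (cases "?F = []")
    case True
    then have "(a,b) \<in> conn inc (E - EB)" using aux by blast
    then have "a = b" using max_lemma[OF H B a b] by blast
    then show ?thesis using True by simp
  next
    case False
    then have c1: "(a, fst (hd ?F)) \<in> conn inc (E - EB)" and c2: "chain (fst (hd ?F)) ?F b" using aux by blast+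
    have "hd ?F \<in> set ?F" using False by (rule hd_in_set)
    then have "hd ?F \<in> {x \<in> set S. edg x \<in> EB}" by (simp only: set_filter)
    then have "hd ?F \<in> set S" "edg (hd ?F) \<in> EB" by simp_all
    then have "fst (hd ?F) \<in> VB" using vst incB unfolding vstep_def by blast
    then have "a = fst (hd ?F)" using max_lemma[OF H B a _ _ c1] by blast
    then show ?thesis using c2 by simp
  qed
qed

lemma restrict:
  assumes H: "hypergraph V E inc" and B: "block V E inc VB EB"
    and S: "ctr V E inc S" and s0: "s0 \<in> set S" "fst s0 \<in> VB" and ex: "\<exists>s\<in>set S. edg s \<in> EB"
  shows "\<exists>R. ctr VB EB inc R \<and> set R = {s\<in>set S. edg s \<in> EB} \<and> fst s0 \<in> fst ` set R"
proof -
  obtain S' where S': "ctr V E inc S'" "set S' = set S" "chain (fst s0) S' (fst s0)"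
    using ctr_rotate[OF S s0(1)] by blast
  define R where "R = filter (\<lambda>s. edg s \<in> EB) S'"
  have vst: "\<forall>s\<in>set S'. vstep V E inc s" using S'(1) unfolding ctr_def by blast
  have ch: "chain (fst s0) R (fst s0)" unfolding R_def by (rule filt_chain[OF H B vst S'(3) s0(2) s0(2)])
  have setR: "set R = {s\<in>set S. edg s \<in> EB}" unfolding R_def using S'(2) by auto
  have ne: "R \<noteq> []" using setR ex by auto
  have incB: "\<And>e. e \<in> EB \<Longrightarrow> inc e \<subseteq> VB" using block_props(2)[OF B] unfolding hypergraph_def by blast
  have vR: "\<forall>s\<in>set R. vstep VB EB inc s"
  proof
    fix s assume "s \<in> set R"
    then have "s \<in> set S" "edg s \<in> EB" "vstep V E inc s" using setR S unfolding ctr_def by auto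
    then show "vstep VB EB inc s" using incB unfolding vstep_def by blast
  qed
  have "distinct (map edg R)" unfolding R_def using S'(1) unfolding ctr_def by (simp add: distinct_map_filter)
  then have "ctr VB EB inc R" unfolding ctr_def using ne vR ch by blast
  moreover have "fst s0 \<in> fst ` set R" using chain_hd[OF ch ne] ne by (metis hd_in_set image_eqI)
  ultimately show ?thesis using setR by blast
qed

lemma ctr_merge:
  assumes S1: "ctr V E inc S1" and S2: "ctr V E inc S2"
    and d: "edg ` set S1 \<inter> edg ` set S2 = {}" and s: "s1 \<in> set S1" "s2 \<in> set S2" "fst s1 = fst s2"
  shows "\<exists>M. ctr V E inc M \<and> set M = set S1 \<union> set S2"
proof -
  obtain T1 where T1: "ctr V E inc T1" "set T1 = set S1" "chain (fst s1) T1 (fst s1)"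
    using ctr_rotate[OF S1 s(1)] by blast
  obtain T2 where T2: "ctr V E inc T2" "set T2 = set S2" "chain (fst s1) T2 (fst s1)"
    using ctr_rotate[OF S2 s(2)] s(3) by metis
  have "chain (fst s1) (T1 @ T2) (fst s1)" unfolding chain_append using T1(3) T2(3) by blast
  moreover have "distinct (map edg (T1 @ T2))" using T1 T2 d unfolding ctr_def by auto
  moreover have "\<forall>s\<in>set (T1 @ T2). vstep V E inc s" using T1 T2 unfolding ctr_def by auto
  moreover have "T1 @ T2 \<noteq> []" using T1 unfolding ctr_def by simp
  ultimately have "ctr V E inc (T1 @ T2)" unfolding ctr_def by blast
  then show ?thesis using T1(2) T2(2) by (metis set_append)
qed

lemma ctr_mono: "ctr V' E' inc S \<Longrightarrow> V' \<subseteq> V \<Longrightarrow> E' \<subseteq> E \<Longrightarrow> ctr V E inc S"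
  unfolding ctr_def vstep_def by blast

lemma ctr_edges: "ctr V E inc S \<Longrightarrow> edg ` set S \<subseteq> E"
  unfolding ctr_def vstep_def by blast

lemma ctr_ne: "ctr V E inc S \<Longrightarrow> S \<noteq> []"
  unfolding ctr_def by blast

lemma ctr_finite:
  assumes "finite V" "finite E"
  shows "finite {S. ctr V E inc S}"
proof -
  have "{S. ctr V E inc S} \<subseteq> {S. set S \<subseteq> V \<times> E \<times> V \<and> length S \<le> card E}"
  proof
    fix S assume "S \<in> {S. ctr V E inc S}"
    then have c: "ctr V E inc S" by simp
    have "set S \<subseteq> V \<times> E \<times> V"
    proof
      fix s assume "s \<in> set S"
      then have "vstep V E inc s" using c unfolding ctr_def by blast
      then show "s \<in> V \<times> E \<times> V" unfolding vstep_def edg_def tgt_def by (cases s) auto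
    qed
    moreover have "length S \<le> card E"
    proof -
      have "length S = length (map edg S)" by simp
      also have "\<dots> = card (set (map edg S))" using c unfolding ctr_def by (metis distinct_card)
      also have "\<dots> \<le> card E" using ctr_edges[OF c] assms(2) by (simp add: card_mono)
      finally show ?thesis .
    qed
    ultimately show "S \<in> {S. set S \<subseteq> V \<times> E \<times> V \<and> length S \<le> card E}" by simp
  qed
  moreover have "finite {S. set S \<subseteq> V \<times> E \<times> V \<and> length S \<le> card E}"
    using finite_lists_length_le[of "V \<times> E \<times> V" "card E"] assms by simp
  ultimately show ?thesis by (rule finite_subset)
qed

definition pdisj :: "('v \<times> 'e \<times> 'v) list set \<Rightarrow> bool" where
  "pdisj F \<longleftrightarrow> (\<forall>S1\<in>F. \<forall>S2\<in>F. S1 \<noteq> S2 \<longrightarrow> edg ` set S1 \<inter> edg ` set S2 = {})"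

definition adisj :: "('v \<times> 'e \<times> 'v) list set \<Rightarrow> bool" where
  "adisj F \<longleftrightarrow> (\<forall>S1\<in>F. \<forall>S2\<in>F. S1 \<noteq> S2 \<longrightarrow> fst ` set S1 \<inter> fst ` set S2 = {})"

lemma family_merge:
  assumes "finite F" "\<forall>S\<in>F. ctr V E inc S" "pdisj F"
  shows "\<exists>F'. finite F' \<and> (\<forall>S\<in>F'. ctr V E inc S) \<and> pdisj F' \<and> adisj F' \<and>
     (\<Union>S\<in>F'. edg ` set S) = (\<Union>S\<in>F. edg ` set S) \<and> (\<forall>S\<in>F. \<exists>S'\<in>F'. set S \<subseteq> set S')"
  using assms
proof (induction "card F" arbitrary: F rule: less_induct)
  case less
  show ?case
  proof (cases "adisj F")
    case True
    then show ?thesis using less.prems by blast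
  next
    case False
    then obtain S1 S2 a where S: "S1 \<in> F" "S2 \<in> F" "S1 \<noteq> S2" "a \<in> fst ` set S1" "a \<in> fst ` set S2"
      unfolding adisj_def by blast
    then obtain s1 s2 where s: "s1 \<in> set S1" "s2 \<in> set S2" "fst s1 = fst s2" by force
    have d: "edg ` set S1 \<inter> edg ` set S2 = {}" using less.prems(3) S unfolding pdisj_def by blast
    obtain M where M: "ctr V E inc M" "set M = set S1 \<union> set S2"
      using ctr_merge[OF _ _ d s] less.prems(2) S by blast
    define F2 where "F2 = insert M (F - {S1, S2})"
    have fin2: "finite F2" unfolding F2_def using less.prems(1) by simp
    have "card (F - {S1, S2}) = card F - 2" using S less.prems(1) by (simp add: card_Diff_subset)
    moreover have "card F \<ge> 2"
    proof -
      have "{S1,S2} \<subseteq> F" using S by blast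
      then have "card {S1,S2} \<le> card F" by (rule card_mono[OF less.prems(1)])
      moreover have "card {S1,S2} = 2" using S(3) by simp
      ultimately show ?thesis by simp
    qed
    moreover have "card F2 \<le> Suc (card (F - {S1, S2}))" unfolding F2_def using less.prems(1) by (simp add: card_insert_if)
    ultimately have c2: "card F2 < card F" by linarith
    have ctr2: "\<forall>S\<in>F2. ctr V E inc S" unfolding F2_def using M less.prems(2) by blast
    have eM: "edg ` set M = edg ` set S1 \<union> edg ` set S2" using M(2) by auto
    have pd2: "pdisj F2" unfolding pdisj_def
    proof (intro ballI impI)
      fix X Y assume XY: "X \<in> F2" "Y \<in> F2" "X \<noteq> Y"
      show "edg ` set X \<inter> edg ` set Y = {}"
      proof (cases "X = M")
        case True
        then have "Y \<in> F - {S1, S2}" using XY unfolding F2_def by blast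
        then show ?thesis using True eM less.prems(3) S(1,2) unfolding pdisj_def by blast
      next
        case False
        then have X: "X \<in> F - {S1,S2}" using XY unfolding F2_def by blast
        show ?thesis
        proof (cases "Y = M")
          case True
          then show ?thesis using X eM less.prems(3) S(1,2) unfolding pdisj_def by blast
        next
          case False
          then have "Y \<in> F - {S1,S2}" using XY unfolding F2_def by blast
          then show ?thesis using X XY(3) less.prems(3) unfolding pdisj_def by blast
        qed
      qed
    qed
    obtain F' where F': "finite F'" "\<forall>S\<in>F'. ctr V E inc S" "pdisj F'" "adisj F'"
      "(\<Union>S\<in>F'. edg ` set S) = (\<Union>S\<in>F2. edg ` set S)" "\<forall>S\<in>F2. \<exists>S'\<in>F'. set S \<subseteq> set S'"
      using less.hyps[OF c2 fin2 ctr2 pd2] by (elim exE conjE) (rule that; assumption)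
    have "(\<Union>S\<in>F2. edg ` set S) = (\<Union>S\<in>F. edg ` set S)"
      unfolding F2_def using eM S(1,2) by blast
    moreover have "\<forall>S\<in>F. \<exists>S'\<in>F'. set S \<subseteq> set S'"
    proof
      fix S assume SF: "S \<in> F"
      show "\<exists>S'\<in>F'. set S \<subseteq> set S'"
      proof (cases "S = S1 \<or> S = S2")
        case True
        then have "set S \<subseteq> set M" using M(2) by blast
        moreover obtain S' where "S' \<in> F'" "set M \<subseteq> set S'" using F'(6) unfolding F2_def by blast
        ultimately show ?thesis by blast
      next
        case False
        then have "S \<in> F2" using SF unfolding F2_def by blast
        then show ?thesis using F'(6) by blast
      qed
    qed
    ultimately show ?thesis using F'(1-5) by (intro exI[of _ F'] conjI) simp_all
  qed
qed

lemma fam_to_euler: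
  assumes "\<forall>S\<in>F. ctr V E inc S" "pdisj F" "adisj F" "(\<Union>S\<in>F. edg ` set S) = E"
  shows "euler_family V E inc (toVE ` F)"
  unfolding euler_family_def
proof (intro conjI ballI impI)
  fix T assume "T \<in> toVE ` F"
  then obtain S where S: "S \<in> F" "T = toVE S" by blast
  show "closed_strict_trail V E inc (fst T) (snd T)" using ctr_toVE assms(1) S by blast
next
  fix e assume e: "e \<in> E"
  then obtain S where S: "S \<in> F" "e \<in> edg ` set S" using assms(4) by blast
  have ex: "e \<in> set (snd (toVE S))" using S toVE_sets(2) by metis
  show "\<exists>!T. T \<in> toVE ` F \<and> e \<in> set (snd T)"
  proof (rule ex1I[of _ "toVE S"])
    show "toVE S \<in> toVE ` F \<and> e \<in> set (snd (toVE S))" using S ex by blast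
  next
    fix T assume T: "T \<in> toVE ` F \<and> e \<in> set (snd T)"
    then obtain S' where S': "S' \<in> F" "T = toVE S'" by blast
    then have "e \<in> edg ` set S'" using T toVE_sets(2) by metis
    then have "S' = S" using assms(2) S S' unfolding pdisj_def by blast
    then show "T = toVE S" using S' by simp
  qed
next
  fix T1 T2 assume T: "T1 \<in> toVE ` F" "T2 \<in> toVE ` F" "T1 \<noteq> T2"
  then obtain S1 S2 where S: "S1 \<in> F" "S2 \<in> F" "T1 = toVE S1" "T2 = toVE S2" by blast
  then have "S1 \<noteq> S2" using T by blast
  then have "fst ` set S1 \<inter> fst ` set S2 = {}" using assms(3) S unfolding adisj_def by blast
  moreover have "set (fst T1) = fst ` set S1" "set (fst T2) = fst ` set S2"
    using S toVE_sets(1) ctr_ne assms(1) by metis+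
  ultimately show "set (fst T1) \<inter> set (fst T2) = {}" by simp
qed

lemma trans_aux:
  "chain a S b \<Longrightarrow> S \<noteq> [] \<Longrightarrow> P (hd S) \<Longrightarrow> \<exists>s\<in>set S. \<not> P s \<Longrightarrow>
   \<exists>s1\<in>set S. \<exists>s2\<in>set S. P s1 \<and> \<not> P s2 \<and> tgt s1 = fst s2"
proof (induction S arbitrary: a)
  case Nil then show ?case by simp
next
  case (Cons s S)
  have ch: "chain (tgt s) S b" using Cons.prems(1) by (simp add: chain_Cons)
  have Ps: "P s" using Cons.prems(3) by simp
  have Sne: "S \<noteq> []" using Cons.prems(4) Ps by auto
  have hdS: "fst (hd S) = tgt s" by (rule chain_hd[OF ch Sne])
  show ?case
  proof (cases "P (hd S)")
    case False
    then show ?thesis using Ps hdS Sne by (metis hd_in_set list.set_intros(1) list.set_intros(2))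
  next
    case True
    have "\<exists>s\<in>set S. \<not> P s" using Cons.prems(4) Ps by auto
    then show ?thesis using Cons.IH[OF ch Sne True] by auto
  qed
qed

lemma transition:
  assumes S: "ctr V E inc S" and cov: "edg ` set S \<subseteq> E1 \<union> E2"
    and ex1: "\<exists>s\<in>set S. edg s \<in> E1" and ex2: "\<exists>s\<in>set S. edg s \<notin> E1"
    and i1: "\<forall>g\<in>E1. inc g \<subseteq> V1" and i2: "\<forall>g\<in>E2. inc g \<subseteq> V2" and vv: "V1 \<inter> V2 \<subseteq> {v}"
  shows "v \<in> fst ` set S"
proof -
  obtain a where ch: "chain a S a" using S unfolding ctr_def by blast
  have ne: "S \<noteq> []" using S unfolding ctr_def by blast
  have vst: "\<forall>s\<in>set S. vstep V E inc s" using S unfolding ctr_def by blast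
  have "\<exists>s1\<in>set S. \<exists>s2\<in>set S. edg s1 \<in> E1 \<and> edg s2 \<notin> E1 \<and> tgt s1 = fst s2 \<or>
           edg s1 \<notin> E1 \<and> edg s2 \<in> E1 \<and> tgt s1 = fst s2"
  proof (cases "edg (hd S) \<in> E1")
    case True
    then show ?thesis using trans_aux[OF ch ne, of "\<lambda>s. edg s \<in> E1"] ex2 by blast
  next
    case False
    then show ?thesis using trans_aux[OF ch ne, of "\<lambda>s. edg s \<notin> E1"] ex1 by blast
  qed
  then obtain s1 s2 where s: "s1 \<in> set S" "s2 \<in> set S" "tgt s1 = fst s2"
    "(edg s1 \<in> E1 \<and> edg s2 \<notin> E1) \<or> (edg s1 \<notin> E1 \<and> edg s2 \<in> E1)" by blast
  have inc1: "tgt s1 \<in> inc (edg s1)" "fst s2 \<in> inc (edg s2)" using vst s(1,2) unfolding vstep_def by blast+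
  have "edg s1 \<in> E1 \<union> E2" "edg s2 \<in> E1 \<union> E2" using cov s(1,2) by blast+
  moreover have f1: "fst s2 \<in> inc (edg s1)" using inc1(1) s(3) by simp
  ultimately have "fst s2 \<in> V1 \<inter> V2"
  proof (cases "edg s1 \<in> E1")
    case True
    then have "edg s2 \<in> E2" using s(4) \<open>edg s2 \<in> E1 \<union> E2\<close> by blast
    then show ?thesis using True f1 inc1(2) i1 i2 by blast
  next
    case False
    then have "edg s1 \<in> E2" "edg s2 \<in> E1" using s(4) \<open>edg s1 \<in> E1 \<union> E2\<close> by blast+
    then show ?thesis using f1 inc1(2) i1 i2 by blast
  qed
  then have "fst s2 = v" using vv by blast
  then show ?thesis using s(2) by force
qed

lemma toS_ex:
  assumes "closed_strict_trail V E inc (fst T) (snd T)"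
  shows "ctr V E inc (SOME S. ctr V E inc S \<and> toVE S = T) \<and> toVE (SOME S. ctr V E inc S \<and> toVE S = T) = T"
proof -
  have "\<exists>S. ctr V E inc S \<and> toVE S = T" using cst_toS[OF assms] by simp
  then show ?thesis by (rule someI_ex)
qed

lemma ctr_sets:
  assumes "ctr V E inc S" "toVE S = T"
  shows "set (fst T) = fst ` set S" "set (snd T) = edg ` set S"
  using toVE_sets(1)[OF ctr_ne[OF assms(1)]] toVE_sets(2)[of S] assms(2) by auto

lemma part1_fwd:
  assumes H: "hypergraph V E inc" and F: "euler_family V E inc F" and B: "block V E inc VB EB"
  shows "has_euler_family VB EB inc"
proof -
  define toS where "toS T = (SOME S. ctr V E inc S \<and> toVE S = T)" for T
  have tS: "ctr V E inc (toS T) \<and> toVE (toS T) = T" if "T \<in> F" for T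
    unfolding toS_def by (rule toS_ex) (use F that in \<open>simp add: euler_family_def\<close>)
  have anchT: "set (fst T) = fst ` set (toS T)" "set (snd T) = edg ` set (toS T)" if "T \<in> F" for T
    using ctr_sets[of V E inc "toS T" T] tS[OF that] by auto
  have incB: "\<And>e. e \<in> EB \<Longrightarrow> inc e \<subseteq> VB" using block_props(2)[OF B] unfolding hypergraph_def by blast
  define G where "G = {T \<in> F. set (snd T) \<inter> EB \<noteq> {}}"
  have rex: "\<exists>R. ctr VB EB inc R \<and> set R = {s\<in>set (toS T). edg s \<in> EB}" if T: "T \<in> G" for T
  proof -
    have TF: "T \<in> F" using T unfolding G_def by simp
    obtain e where e: "e \<in> set (snd T)" "e \<in> EB" using T unfolding G_def by blast
    have "e \<in> edg ` set (toS T)" using e(1) anchT(2)[OF TF] by simp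
    then obtain s0 where s0: "s0 \<in> set (toS T)" "edg s0 = e" by (rule imageE) simp
    have "vstep V E inc s0" using tS[OF TF] s0 unfolding ctr_def by blast
    then have "fst s0 \<in> VB" using incB e(2) s0(2) unfolding vstep_def by blast
    then show ?thesis using restrict[OF H B _ s0(1)] tS[OF TF] s0 e(2) by blast
  qed
  define rs where "rs T = (SOME R. ctr VB EB inc R \<and> set R = {s\<in>set (toS T). edg s \<in> EB})" for T
  have rsP: "ctr VB EB inc (rs T) \<and> set (rs T) = {s\<in>set (toS T). edg s \<in> EB}" if "T \<in> G" for T
    unfolding rs_def by (rule someI_ex[OF rex[OF that]])
  define FB where "FB = (\<lambda>T. toVE (rs T)) ` G"
  have rs_sets: "set (fst (toVE (rs T))) \<subseteq> set (fst T)" "set (snd (toVE (rs T))) = set (snd T) \<inter> EB"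
    if T: "T \<in> G" for T
  proof -
    have TF: "T \<in> F" using T unfolding G_def by simp
    have ne: "rs T \<noteq> []" using rsP[OF T] ctr_ne by blast
    show "set (fst (toVE (rs T))) \<subseteq> set (fst T)"
      using toVE_sets(1)[OF ne] rsP[OF T] anchT(1)[OF TF] by auto
    show "set (snd (toVE (rs T))) = set (snd T) \<inter> EB"
      using toVE_sets(2)[of "rs T"] rsP[OF T] anchT(2)[OF TF] by auto
  qed
  have "euler_family VB EB inc FB"
    unfolding euler_family_def
  proof (intro conjI ballI impI)
    fix X assume "X \<in> FB"
    then obtain T where T: "T \<in> G" "X = toVE (rs T)" unfolding FB_def by blast
    show "closed_strict_trail VB EB inc (fst X) (snd X)" using ctr_toVE rsP[OF T(1)] T(2) by blast
  next
    fix e assume e: "e \<in> EB"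
    have eE: "e \<in> E" using e block_props(6)[OF B] by blast
    then obtain T where T: "T \<in> F" "e \<in> set (snd T)" and uT: "\<And>T'. T' \<in> F \<Longrightarrow> e \<in> set (snd T') \<Longrightarrow> T' = T"
      using F unfolding euler_family_def by metis
    have TG: "T \<in> G" using T e unfolding G_def by blast
    show "\<exists>!X. X \<in> FB \<and> e \<in> set (snd X)"
    proof (rule ex1I[of _ "toVE (rs T)"])
      show "toVE (rs T) \<in> FB \<and> e \<in> set (snd (toVE (rs T)))"
        using TG rs_sets(2)[OF TG] T(2) e unfolding FB_def by blast
    next
      fix X assume X: "X \<in> FB \<and> e \<in> set (snd X)"
      then obtain T' where T': "T' \<in> G" "X = toVE (rs T')" unfolding FB_def by blast
      then have "e \<in> set (snd T')" using X rs_sets(2)[OF T'(1)] by blast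
      moreover have "T' \<in> F" using T'(1) unfolding G_def by simp
      ultimately have "T' = T" using uT by blast
      then show "X = toVE (rs T)" using T' by simp
    qed
  next
    fix X1 X2 assume X: "X1 \<in> FB" "X2 \<in> FB" "X1 \<noteq> X2"
    then obtain T1 T2 where T: "T1 \<in> G" "T2 \<in> G" "X1 = toVE (rs T1)" "X2 = toVE (rs T2)"
      unfolding FB_def by blast
    then have "T1 \<noteq> T2" using X by blast
    moreover have "T1 \<in> F" "T2 \<in> F" using T unfolding G_def by simp_all
    ultimately have "set (fst T1) \<inter> set (fst T2) = {}" using F unfolding euler_family_def by blast
    then show "set (fst X1) \<inter> set (fst X2) = {}" using rs_sets(1)[OF T(1)] rs_sets(1)[OF T(2)] T by blast
  qed
  then show ?thesis unfolding has_euler_family_def by blast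
qed

lemma part2_fwd:
  assumes H: "hypergraph V E inc" "hconnected V E inc" and T: "euler_tour V E inc vs es"
    and B: "block V E inc VB EB"
  shows "\<exists>vs es. euler_tour VB EB inc vs es \<and> (\<forall>v\<in>VB. separating_vertex V E inc v \<longrightarrow> v \<in> set vs)"
proof -
  have cst: "closed_strict_trail V E inc vs es" and eset: "set es = E" using T unfolding euler_tour_def by auto
  obtain S where S: "ctr V E inc S" "toVE S = (vs, es)" using cst_toS[OF cst] by blast
  have eS: "edg ` set S = E" using ctr_sets(2)[OF S] eset by simp
  have ne: "S \<noteq> []" by (rule ctr_ne[OF S(1)])
  obtain s where s: "s \<in> set S" using ne by (cases S) auto
  have vs: "vstep V E inc s" using S(1) s unfolding ctr_def by blast
  have sv: "fst s \<in> V" "tgt s \<in> V" "fst s \<noteq> tgt s" using vs unfolding vstep_def by auto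
  have VE: "V = Vof inc E"
    by (rule hconn_Vof[OF H(2) _ sv]) (use edges_sub[OF H(1)] in blast)
  obtain v0 where v0: "v0 \<in> VB" using block_props(2)[OF B] unfolding hypergraph_def by blast
  have "v0 \<in> Vof inc E" using v0 block_props(5)[OF B] VE by blast
  then have EBne: "EB \<noteq> {}" by (rule block_edges_ne[OF H(1) B v0])
  then obtain e where e: "e \<in> EB" by blast
  have eE: "e \<in> E" using e block_props(6)[OF B] by blast
  then obtain s0 where s0: "s0 \<in> set S" "edg s0 = e" using eS by blast
  have incB: "\<And>e. e \<in> EB \<Longrightarrow> inc e \<subseteq> VB" using block_props(2)[OF B] unfolding hypergraph_def by blast
  have "vstep V E inc s0" using S(1) s0 unfolding ctr_def by blast
  then have s0V: "fst s0 \<in> VB" using incB e s0(2) unfolding vstep_def by blast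
  obtain R where R: "ctr VB EB inc R" "set R = {s\<in>set S. edg s \<in> EB}"
    using restrict[OF H(1) B S(1) s0(1) s0V] s0 e by blast
  have Rne: "R \<noteq> []" by (rule ctr_ne[OF R(1)])
  have "edg ` set R = EB" using R(2) eS block_props(6)[OF B] by auto
  then have et: "euler_tour VB EB inc (fst (toVE R)) (snd (toVE R))"
    unfolding euler_tour_def using ctr_toVE[OF R(1)] toVE_sets(2)[of R] by simp
  have sepv: "v \<in> set (fst (toVE R))" if v: "v \<in> VB" "separating_vertex V E inc v" for v
  proof -
    have "separating_vertex_conn V E inc v" using v(2) sep_iff[OF H] by blast
    then obtain V1 E1 V2 E2 where d: "hypersubgraph V1 E1 V E inc" "hypersubgraph V2 E2 V E inc"
      "E1 \<noteq> {}" "E2 \<noteq> {}" "E1 \<union> E2 = E" "E1 \<inter> E2 = {}" "V1 \<inter> V2 = {v}"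
      unfolding separating_vertex_conn_def by blast
    have i1: "\<forall>g\<in>E1. inc g \<subseteq> V1" using d(1) unfolding hypersubgraph_def hypergraph_def by blast
    have i2: "\<forall>g\<in>E2. inc g \<subseteq> V2" using d(2) unfolding hypersubgraph_def hypergraph_def by blast
    have "E1 \<subseteq> E1 \<union> E2" "E2 \<subseteq> E1 \<union> E2" by (rule Un_upper1, rule Un_upper2)
    then have E12: "E1 \<subseteq> edg ` set S" "E2 \<subseteq> edg ` set S" using d(5) eS by simp_all
    obtain g1 where g1: "g1 \<in> E1" using d(3) by blast
    obtain g2 where g2: "g2 \<in> E2" using d(4) by blast
    have g2n: "g2 \<notin> E1" using g2 d(6) by blast
    obtain s1 where "s1 \<in> set S" "edg s1 = g1" using E12(1) g1 by blast
    then have ex1: "\<exists>s\<in>set S. edg s \<in> E1" using g1 by blast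
    obtain s2 where "s2 \<in> set S" "edg s2 = g2" using E12(2) g2 by blast
    then have ex2: "\<exists>s\<in>set S. edg s \<notin> E1" using g2n by blast
    have "v \<in> fst ` set S" by (rule transition[OF S(1) _ ex1 ex2 i1 i2]) (use d(5,7) eS in auto)
    then obtain s1 where s1: "s1 \<in> set S" "fst s1 = v" by blast
    obtain R' where R': "ctr VB EB inc R'" "set R' = {s\<in>set S. edg s \<in> EB}" "fst s1 \<in> fst ` set R'"
      using restrict[OF H(1) B S(1) s1(1)] s1 v(1) s0 e by blast
    then have "v \<in> fst ` set R" using R(2) s1(2) by simp
    then show ?thesis using toVE_sets(1)[OF Rne] by simp
  qed
  show ?thesis using et sepv by blast
qed

lemma part1_bwd:
  assumes H: "hypergraph V E inc" and all: "\<forall>VB EB. block V E inc VB EB \<longrightarrow> has_euler_family VB EB inc"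
  shows "has_euler_family V E inc"
proof -
  define fb where "fb VB EB = (SOME F. euler_family VB EB inc F)" for VB EB
  have fbP: "euler_family VB EB inc (fb VB EB)" if "block V E inc VB EB" for VB EB
    unfolding fb_def using all that unfolding has_euler_family_def by (metis someI_ex)
  define toS where "toS VB EB T = (SOME S. ctr VB EB inc S \<and> toVE S = T)" for VB EB T
  have tS: "ctr VB EB inc (toS VB EB T) \<and> toVE (toS VB EB T) = T"
    if "block V E inc VB EB" "T \<in> fb VB EB" for VB EB T
    unfolding toS_def by (rule toS_ex) (use fbP[OF that(1)] that(2) in \<open>simp add: euler_family_def\<close>)
  define G where "G = {S. \<exists>VB EB T. block V E inc VB EB \<and> T \<in> fb VB EB \<and> S = toS VB EB T}"
  have Gctr: "\<forall>S\<in>G. ctr V E inc S"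
  proof
    fix S assume "S \<in> G"
    then obtain VB EB T where b: "block V E inc VB EB" "T \<in> fb VB EB" "S = toS VB EB T" unfolding G_def by blast
    show "ctr V E inc S" using ctr_mono tS[OF b(1,2)] b(3) block_props(5,6)[OF b(1)] by blast
  qed
  have fin: "finite G"
  proof -
    have "G \<subseteq> {S. ctr V E inc S}" using Gctr by blast
    moreover have "finite {S. ctr V E inc S}" using H ctr_finite unfolding hypergraph_def by blast
    ultimately show ?thesis by (rule finite_subset)
  qed
  have pd: "pdisj G" unfolding pdisj_def
  proof (intro ballI impI)
    fix S1 S2 assume S: "S1 \<in> G" "S2 \<in> G" "S1 \<noteq> S2"
    obtain VB1 EB1 T1 where b1: "block V E inc VB1 EB1" "T1 \<in> fb VB1 EB1" "S1 = toS VB1 EB1 T1"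
      using S(1) unfolding G_def by blast
    obtain VB2 EB2 T2 where b2: "block V E inc VB2 EB2" "T2 \<in> fb VB2 EB2" "S2 = toS VB2 EB2 T2"
      using S(2) unfolding G_def by blast
    show "edg ` set S1 \<inter> edg ` set S2 = {}"
    proof (rule ccontr)
      assume "edg ` set S1 \<inter> edg ` set S2 \<noteq> {}"
      then obtain e where e: "e \<in> edg ` set S1" "e \<in> edg ` set S2" by blast
      have e1: "e \<in> EB1" using e(1) ctr_edges tS[OF b1(1,2)] b1(3) by blast
      have e2: "e \<in> EB2" using e(2) ctr_edges tS[OF b2(1,2)] b2(3) by blast
      have eq: "VB1 = VB2 \<and> EB1 = EB2" by (rule block_unique[OF H b1(1) b2(1) e1 e2])
      have "e \<in> set (snd T1)" using ctr_sets(2)[of VB1 EB1 inc S1 T1] tS[OF b1(1,2)] b1(3) e(1) by simp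
      moreover have "e \<in> set (snd T2)" using ctr_sets(2)[of VB2 EB2 inc S2 T2] tS[OF b2(1,2)] b2(3) e(2) by simp
      moreover have "T2 \<in> fb VB1 EB1" using b2(2) eq by simp
      ultimately have "T1 = T2" using fbP[OF b1(1)] b1(2) e1 unfolding euler_family_def by metis
      then have "S1 = S2" using b1(3) b2(3) eq by simp
      then show False using S(3) by simp
    qed
  qed
  have cov: "(\<Union>S\<in>G. edg ` set S) = E"
  proof
    show "(\<Union>S\<in>G. edg ` set S) \<subseteq> E" using Gctr ctr_edges by blast
    show "E \<subseteq> (\<Union>S\<in>G. edg ` set S)"
    proof
      fix e assume e: "e \<in> E"
      then obtain VB EB where b: "block V E inc VB EB" "e \<in> EB" using edge_in_block[OF H] by blast
      then obtain T where T: "T \<in> fb VB EB" "e \<in> set (snd T)" using fbP[OF b(1)] unfolding euler_family_def by metis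
      have "toS VB EB T \<in> G" unfolding G_def using b T by blast
      moreover have "e \<in> edg ` set (toS VB EB T)" using ctr_sets(2)[of VB EB inc "toS VB EB T" T] tS[OF b(1) T(1)] T(2) by simp
      ultimately show "e \<in> (\<Union>S\<in>G. edg ` set S)" by blast
    qed
  qed
  obtain F' where F': "finite F'" "\<forall>S\<in>F'. ctr V E inc S" "pdisj F'" "adisj F'"
      "(\<Union>S\<in>F'. edg ` set S) = (\<Union>S\<in>G. edg ` set S)"
    using family_merge[OF fin Gctr pd] by (elim exE conjE) (rule that; assumption)
  have "euler_family V E inc (toVE ` F')" by (rule fam_to_euler) (use F' cov in simp_all)
  then show ?thesis unfolding has_euler_family_def by blast
qed

lemma part2_bwd:
  assumes H: "hypergraph V E inc" "hconnected V E inc"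
    and all: "\<forall>VB EB. block V E inc VB EB \<longrightarrow>
               (\<exists>vs es. euler_tour VB EB inc vs es \<and>
                  (\<forall>v\<in>VB. separating_vertex V E inc v \<longrightarrow> v \<in> set vs))"
  shows "has_euler_tour V E inc"
proof -
  define tb where "tb VB EB = (SOME p. euler_tour VB EB inc (fst p) (snd p) \<and>
                  (\<forall>v\<in>VB. separating_vertex V E inc v \<longrightarrow> v \<in> set (fst p)))" for VB EB
  have tbP: "euler_tour VB EB inc (fst (tb VB EB)) (snd (tb VB EB)) \<and>
                  (\<forall>v\<in>VB. separating_vertex V E inc v \<longrightarrow> v \<in> set (fst (tb VB EB)))"
    if "block V E inc VB EB" for VB EB
  proof -
    have "\<exists>p. euler_tour VB EB inc (fst p) (snd p) \<and>
                  (\<forall>v\<in>VB. separating_vertex V E inc v \<longrightarrow> v \<in> set (fst p))"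
    proof -
      have "\<exists>vs es. euler_tour VB EB inc vs es \<and>
                  (\<forall>v\<in>VB. separating_vertex V E inc v \<longrightarrow> v \<in> set vs)"
        using all[rule_format, OF that] .
      then obtain vs es where "euler_tour VB EB inc vs es \<and>
                  (\<forall>v\<in>VB. separating_vertex V E inc v \<longrightarrow> v \<in> set vs)" by (elim exE)
      then show ?thesis by (intro exI[of _ "(vs,es)"]) simp
    qed
    then show ?thesis unfolding tb_def by (rule someI_ex)
  qed
  define sb where "sb VB EB = (SOME S. ctr VB EB inc S \<and> toVE S = tb VB EB)" for VB EB
  have sbP: "ctr VB EB inc (sb VB EB) \<and> toVE (sb VB EB) = tb VB EB" if "block V E inc VB EB" for VB EB
  proof -
    have "closed_strict_trail VB EB inc (fst (tb VB EB)) (snd (tb VB EB))"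
      using tbP[OF that] unfolding euler_tour_def by blast
    then show ?thesis unfolding sb_def by (rule toS_ex)
  qed
  have sb_edges: "edg ` set (sb VB EB) = EB" if "block V E inc VB EB" for VB EB
    using ctr_sets(2)[of VB EB inc "sb VB EB" "tb VB EB"] sbP[OF that] tbP[OF that]
    unfolding euler_tour_def by simp
  have sb_anch: "v \<in> fst ` set (sb VB EB)" if "block V E inc VB EB" "v \<in> VB" "separating_vertex V E inc v" for VB EB v
    using ctr_sets(1)[of VB EB inc "sb VB EB" "tb VB EB"] sbP[OF that(1)] tbP[OF that(1)] that(2,3) by simp
  show ?thesis
  proof (cases "E = {}")
    case True
    obtain VB EB where b: "block V E inc VB EB" using block_exists[OF H(1)] by blast
    have "EB = {}" using block_props(6)[OF b] True by simp
    then have "edg ` set (sb VB EB) = {}" using sb_edges[OF b] by simp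
    then have "sb VB EB = []" by simp
    moreover have "sb VB EB \<noteq> []" by (rule ctr_ne[OF conjunct1[OF sbP[OF b]]])
    ultimately show ?thesis by contradiction
  next
    case Ene: False
    define G where "G = {S. \<exists>VB EB. block V E inc VB EB \<and> S = sb VB EB}"
    have Gctr: "\<forall>S\<in>G. ctr V E inc S"
    proof
      fix S assume "S \<in> G"
      then obtain VB EB where b: "block V E inc VB EB" "S = sb VB EB" unfolding G_def by blast
      show "ctr V E inc S" using ctr_mono sbP[OF b(1)] b(2) block_props(5,6)[OF b(1)] by blast
    qed
    have fin: "finite G"
    proof -
      have "G \<subseteq> {S. ctr V E inc S}" using Gctr by blast
      moreover have "finite {S. ctr V E inc S}" using H ctr_finite unfolding hypergraph_def by blast
      ultimately show ?thesis by (rule finite_subset)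
    qed
    have pd: "pdisj G" unfolding pdisj_def
    proof (intro ballI impI)
      fix S1 S2 assume S: "S1 \<in> G" "S2 \<in> G" "S1 \<noteq> S2"
      obtain VB1 EB1 where b1: "block V E inc VB1 EB1" "S1 = sb VB1 EB1" using S(1) unfolding G_def by blast
      obtain VB2 EB2 where b2: "block V E inc VB2 EB2" "S2 = sb VB2 EB2" using S(2) unfolding G_def by blast
      show "edg ` set S1 \<inter> edg ` set S2 = {}"
      proof (rule ccontr)
        assume "edg ` set S1 \<inter> edg ` set S2 \<noteq> {}"
        then obtain e where "e \<in> EB1" "e \<in> EB2" using sb_edges[OF b1(1)] sb_edges[OF b2(1)] b1(2) b2(2) by blast
        then have "VB1 = VB2 \<and> EB1 = EB2" by (rule block_unique[OF H(1) b1(1) b2(1)])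
        then show False using S(3) b1(2) b2(2) by simp
      qed
    qed
    obtain F' where F': "finite F'" "\<forall>S\<in>F'. ctr V E inc S" "pdisj F'" "adisj F'"
        "(\<Union>S\<in>F'. edg ` set S) = (\<Union>S\<in>G. edg ` set S)" "\<forall>S\<in>G. \<exists>S'\<in>F'. set S \<subseteq> set S'"
      using family_merge[OF fin Gctr pd] by (elim exE conjE) (rule that; assumption)
    have cov: "(\<Union>S\<in>G. edg ` set S) = E"
    proof
      show "(\<Union>S\<in>G. edg ` set S) \<subseteq> E" using Gctr ctr_edges by blast
      show "E \<subseteq> (\<Union>S\<in>G. edg ` set S)"
      proof
        fix e assume e: "e \<in> E"
        then obtain VB EB where b: "block V E inc VB EB" "e \<in> EB" using edge_in_block[OF H(1)] by blast
        have "sb VB EB \<in> G" unfolding G_def using b by blast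
        then show "e \<in> (\<Union>S\<in>G. edg ` set S)" using sb_edges[OF b(1)] b(2) by blast
      qed
    qed
    have cont: "\<exists>S'\<in>F'. set (sb VB EB) \<subseteq> set S'" if "block V E inc VB EB" for VB EB
      using F'(6) that unfolding G_def by blast
    obtain e0 where "e0 \<in> E" using Ene by blast
    then obtain S1 where S1: "S1 \<in> F'" using F'(5) cov by blast
    have "edg ` set S1 = E"
    proof (rule ccontr)
      assume neq: "edg ` set S1 \<noteq> E"
      have A: "edg ` set S1 \<subseteq> E" using ctr_edges F'(2) S1 by blast
      have Ane: "edg ` set S1 \<noteq> {}" using ctr_ne F'(2) S1 by blast
      have "Vof inc (edg ` set S1) \<inter> Vof inc (E - edg ` set S1) \<noteq> {}"
        by (rule GAP[OF H]) (use A Ane neq in auto)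
      then obtain x e f where xef: "e \<in> edg ` set S1" "f \<in> E" "f \<notin> edg ` set S1" "x \<in> inc e" "x \<in> inc f"
        unfolding Vof_def by blast
      have eE: "e \<in> E" using A xef(1) by blast
      obtain VBe EBe where be: "block V E inc VBe EBe" "e \<in> EBe" using edge_in_block[OF H(1) eE] by blast
      obtain VBf EBf where bf: "block V E inc VBf EBf" "f \<in> EBf" using edge_in_block[OF H(1) xef(2)] by blast
      obtain Se where Se: "Se \<in> F'" "set (sb VBe EBe) \<subseteq> set Se" using cont[OF be(1)] by blast
      obtain Sf where Sf: "Sf \<in> F'" "set (sb VBf EBf) \<subseteq> set Sf" using cont[OF bf(1)] by blast
      have "e \<in> edg ` set Se" using Se(2) sb_edges[OF be(1)] be(2) by blast
      then have SeS1: "Se = S1" using F'(3) Se(1) S1 xef(1) unfolding pdisj_def by blast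
      have "f \<in> edg ` set Sf" using Sf(2) sb_edges[OF bf(1)] bf(2) by blast
      then have SfS1: "Sf \<noteq> S1" using xef(3) by blast
      show False
      proof (cases "VBe = VBf \<and> EBe = EBf")
        case True
        have "f \<in> edg ` set Se" using Se(2) sb_edges[OF be(1)] bf(2) True by blast
        then show False using SeS1 xef(3) by blast
      next
        case False
        have xe: "x \<in> VBe" using xef(4) be block_props(2)[OF be(1)] unfolding hypergraph_def by blast
        have xf: "x \<in> VBf" using xef(5) bf block_props(2)[OF bf(1)] unfolding hypergraph_def by blast
        have two: "\<exists>y\<in>VB. x \<noteq> y" if b: "block V E inc VB EB" for VB EB
        proof -
          obtain s where s: "s \<in> set (sb VB EB)" using ctr_ne sbP[OF b] by (metis list.set_sel(1))
          then have "vstep VB EB inc s" using sbP[OF b] unfolding ctr_def by blast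
          then show ?thesis unfolding vstep_def by metis
        qed
        obtain y1 where y1: "y1 \<in> VBe" "x \<noteq> y1" using two[OF be(1)] by blast
        obtain y2 where y2: "y2 \<in> VBf" "x \<noteq> y2" using two[OF bf(1)] by blast
        have sx: "separating_vertex V E inc x"
          by (rule block_sep[OF H be(1) bf(1) False xe xf y1 y2])
        have "x \<in> fst ` set Se" using sb_anch[OF be(1) xe sx] Se(2) by blast
        moreover have "x \<in> fst ` set Sf" using sb_anch[OF bf(1) xf sx] Sf(2) by blast
        ultimately show False using F'(4) Se(1) Sf(1) SeS1 SfS1 unfolding adisj_def by blast
      qed
    qed
    then have "euler_tour V E inc (fst (toVE S1)) (snd (toVE S1))"
      unfolding euler_tour_def using ctr_toVE[of V E inc S1] F'(2) S1 toVE_sets(2)[of S1] by simp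
    then show ?thesis unfolding has_euler_tour_def by blast
  qed
qed

theorem theorem2p21:
  fixes V :: "'v set" and E :: "'e set" and inc :: "'e \<Rightarrow> 'v set"
  assumes "hypergraph V E inc"
  shows "(has_euler_family V E inc \<longleftrightarrow>
            (\<forall>VB EB. block V E inc VB EB \<longrightarrow> has_euler_family VB EB inc)) \<and>
         (hconnected V E inc \<longrightarrow>
           (has_euler_tour V E inc \<longleftrightarrow>
            (\<forall>VB EB. block V E inc VB EB \<longrightarrow>
               (\<exists>vs es. euler_tour VB EB inc vs es \<and>
                  (\<forall>v\<in>VB. separating_vertex V E inc v \<longrightarrow> v \<in> set vs)))))"
proof (intro conjI impI iffI allI)
  assume "has_euler_family V E inc"
  then obtain F where "euler_family V E inc F" unfolding has_euler_family_def by blast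
  then show "\<And>VB EB. block V E inc VB EB \<Longrightarrow> has_euler_family VB EB inc"
    using part1_fwd[OF assms] by blast
next
  assume "\<forall>VB EB. block V E inc VB EB \<longrightarrow> has_euler_family VB EB inc"
  then show "has_euler_family V E inc" by (rule part1_bwd[OF assms])
next
  fix VB EB
  assume c: "hconnected V E inc" and t: "has_euler_tour V E inc" and b: "block V E inc VB EB"
  then obtain vs es where "euler_tour V E inc vs es" unfolding has_euler_tour_def by blast
  then show "\<exists>vs es. euler_tour VB EB inc vs es \<and> (\<forall>v\<in>VB. separating_vertex V E inc v \<longrightarrow> v \<in> set vs)"
    by (rule part2_fwd[OF assms c _ b])
next
  assume c: "hconnected V E inc" and a: "\<forall>VB EB. block V E inc VB EB \<longrightarrow>
               (\<exists>vs es. euler_tour VB EB inc vs es \<and>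
                  (\<forall>v\<in>VB. separating_vertex V E inc v \<longrightarrow> v \<in> set vs))"
  show "has_euler_tour V E inc" by (rule part2_bwd[OF assms c a])
qed

end
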